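(* Let $\epsilon\in(0,1/30]$ and let $y$ be the output of the covering procedure described in the context. Then $y\ge 0$ and $A^Ty\ge\mathbf 1$ always hold, and there is an absolute constant $C>0$ such that with probability at least $9/10$, $\mathbf 1^Ty\le (1+C\epsilon)\,\mathrm{OPT}$. The procedure runs Algorithm 1 for $T=O\!\left(\frac{\log^2(1/\epsilon)\log(nm/\epsilon)\log(2n)}{\epsilon^2}\right)$ iterations.
   Context: Standing setup: $A\in\mathbb{R}^{m\times n}_{\ge 0}$ has no zero column and is normalized so that $\min_{i\in[n]}\|A_{:i}\|_\infty=1$, where $A_{:i}$ denotes the $i$-th column. The packing LP is $\max\{\mathbf 1^Tx: x\ge 0,\ Ax\le \mathbf 1\}$ with optimal value $\mathrm{OPT}$, which equals the optimal value of the covering LP $\min\{\mathbf 1^Ty: y\ge 0,\ A^Ty\ge \mathbf 1\}$. $\log$ is the natural logarithm unless written $\log_2$. $\mu=\frac{\epsilon}{4\log(nm/\epsilon)}$, $p_j(x)=\exp\big(\frac{1}{\mu}((Ax)_j-1)\big)$, $p(x)=(p_1(x),\dots,p_m(x))$, $f_\mu(x)=-\mathbf 1^Tx+\mu\sum_j p_j(x)$, with $\nabla_i f_\mu(x)=-1+\sum_j A_{ji}p_j(x)$. Algorithm 1 with $T$ iterations: set $\alpha=\mu/20$, $w=\lceil\log_2(1/\epsilon)\rceil$, $x_0[i]=\frac{1-\epsilon/2}{n\|A_{:i}\|_\infty}$. For $k=0,\dots,T-1$: choose $t_k\in\{0,\dots,w-1\}$ uniformly at random, independently of the past; writing $g_i=\nabla_i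 f_\mu(x_k)$, define $\xi_k[i]=0$ if $|g_i|\le\epsilon$, $\xi_k[i]=g_i$ if $\epsilon<|g_i|\le 1$, $\xi_k[i]=1$ if $g_i>1$; $\xi^{(t)}_k[i]=\xi_k[i]$ if $\epsilon2^t<|\xi_k[i]|\le\epsilon2^{t+1}$ and $0$ otherwise; $x_{k+1}[i]=x_k[i]\exp(-\alpha\,\xi^{(t_k)}_k[i])$. Covering procedure: run Algorithm 1 for $T=\big\lceil\max\{\frac{6w\log(2n)}{\alpha\epsilon},\frac{2w^2\log(n/\epsilon)}{\epsilon^2}\}\big\rceil$ iterations; let $\bar y=\frac1T\sum_{k=0}^{T-1}p(x_k)$. Algorithm 2: set $\bar y'=\bar y$; for every $i\in[n]$ with $\lambda_i:=(A^T\bar y)_i-1+\epsilon\le -2\epsilon$, pick $j$ with $A_{j,i}=\|A_{:i}\|_\infty$ and increase $\bar y'_j$ by $-\lambda_i/A_{j,i}$. Output $y=\bar y'/(1-3\epsilon)$. *)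

theory Defs
  imports "HOL-Probability.Probability"
begin

text \<open>Matrices are A :: nat => nat => real, entry A j i = A_{j,i}, with row indices j < m
and column indices i < n. Vectors are functions nat => real, only indices below the
dimension matter.\<close>

definition colnorm :: "(nat \<Rightarrow> nat \<Rightarrow> real) \<Rightarrow> nat \<Rightarrow> nat \<Rightarrow> real" where
  "colnorm A m i = Max ((\<lambda>j. \<bar>A j i\<bar>) ` {..<m})"

definition OPT :: "(nat \<Rightarrow> nat \<Rightarrow> real) \<Rightarrow> nat \<Rightarrow> nat \<Rightarrow> real" where
  "OPT A m n = Sup {(\<Sum>i<n. x i) | x. (\<forall>i<n. 0 \<le> x i) \<and>
                      (\<forall>j<m. (\<Sum>i<n. A j i * x i) \<le> 1)}"

definition mu :: "nat \<Rightarrow> nat \<Rightarrow> real \<Rightarrow> real" where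
  "mu m n eps = eps / (4 * ln (real n * real m / eps))"

definition Amul :: "(nat \<Rightarrow> nat \<Rightarrow> real) \<Rightarrow> nat \<Rightarrow> (nat \<Rightarrow> real) \<Rightarrow> nat \<Rightarrow> real" where
  "Amul A n x j = (\<Sum>i<n. A j i * x i)"

definition pvec :: "(nat \<Rightarrow> nat \<Rightarrow> real) \<Rightarrow> nat \<Rightarrow> nat \<Rightarrow> real \<Rightarrow> (nat \<Rightarrow> real) \<Rightarrow> nat \<Rightarrow> real" where
  "pvec A m n eps x j = exp ((Amul A n x j - 1) / mu m n eps)"

definition grad :: "(nat \<Rightarrow> nat \<Rightarrow> real) \<Rightarrow> nat \<Rightarrow> nat \<Rightarrow> real \<Rightarrow> (nat \<Rightarrow> real) \<Rightarrow> nat \<Rightarrow> real" where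
  "grad A m n eps x i = -1 + (\<Sum>j<m. A j i * pvec A m n eps x j)"

text \<open>Clipped gradient xi_k[i] (note the gradient is always >= -1).\<close>
definition clip :: "real \<Rightarrow> real \<Rightarrow> real" where
  "clip eps g = (if \<bar>g\<bar> \<le> eps then 0 else if \<bar>g\<bar> \<le> 1 then g else if g > 1 then 1 else g)"

definition bucket :: "real \<Rightarrow> nat \<Rightarrow> real \<Rightarrow> real" where
  "bucket eps t v = (if eps * 2 ^ t < \<bar>v\<bar> \<and> \<bar>v\<bar> \<le> eps * 2 ^ (t + 1) then v else 0)"

definition wpar :: "real \<Rightarrow> nat" where
  "wpar eps = nat \<lceil>log 2 (1 / eps)\<rceil>"

definition alpha :: "nat \<Rightarrow> nat \<Rightarrow> real \<Rightarrow> real" where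
  "alpha m n eps = mu m n eps / 20"

definition x0 :: "(nat \<Rightarrow> nat \<Rightarrow> real) \<Rightarrow> nat \<Rightarrow> nat \<Rightarrow> real \<Rightarrow> nat \<Rightarrow> real" where
  "x0 A m n eps i = (1 - eps / 2) / (real n * colnorm A m i)"

definition alg1_step :: "(nat \<Rightarrow> nat \<Rightarrow> real) \<Rightarrow> nat \<Rightarrow> nat \<Rightarrow> real \<Rightarrow> nat \<Rightarrow> (nat \<Rightarrow> real) \<Rightarrow> nat \<Rightarrow> real" where
  "alg1_step A m n eps t x = (\<lambda>i. x i * exp (- alpha m n eps * bucket eps t (clip eps (grad A m n eps x i))))"

fun alg1_iter :: "(nat \<Rightarrow> nat \<Rightarrow> real) \<Rightarrow> nat \<Rightarrow> nat \<Rightarrow> real \<Rightarrow> nat list \<Rightarrow> nat \<Rightarrow> nat \<Rightarrow> real" where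
  "alg1_iter A m n eps ts 0 = x0 A m n eps"
| "alg1_iter A m n eps ts (Suc k) = alg1_step A m n eps (ts ! k) (alg1_iter A m n eps ts k)"

definition Tpar :: "nat \<Rightarrow> nat \<Rightarrow> real \<Rightarrow> nat" where
  "Tpar m n eps = nat \<lceil>max (6 * real (wpar eps) * ln (2 * real n) / (alpha m n eps * eps))
                             (2 * real (wpar eps) ^ 2 * ln (real n / eps) / eps ^ 2)\<rceil>"

definition ybar :: "(nat \<Rightarrow> nat \<Rightarrow> real) \<Rightarrow> nat \<Rightarrow> nat \<Rightarrow> real \<Rightarrow> nat list \<Rightarrow> nat \<Rightarrow> real" where
  "ybar A m n eps ts = (\<lambda>j. (1 / real (Tpar m n eps)) *
       (\<Sum>k<Tpar m n eps. pvec A m n eps (alg1_iter A m n eps ts k) j))"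

definition lam :: "(nat \<Rightarrow> nat \<Rightarrow> real) \<Rightarrow> nat \<Rightarrow> real \<Rightarrow> (nat \<Rightarrow> real) \<Rightarrow> nat \<Rightarrow> real" where
  "lam A m eps y i = (\<Sum>j<m. A j i * y j) - 1 + eps"

text \<open>Algorithm 2; pick i is the row j chosen for column i (with A j i = colnorm).\<close>
definition alg2 :: "(nat \<Rightarrow> nat \<Rightarrow> real) \<Rightarrow> nat \<Rightarrow> nat \<Rightarrow> real \<Rightarrow> (nat \<Rightarrow> nat) \<Rightarrow> (nat \<Rightarrow> real) \<Rightarrow> nat \<Rightarrow> real" where
  "alg2 A m n eps pick y = (\<lambda>j. y j +
       (\<Sum>i\<in>{i. i < n \<and> lam A m eps y i \<le> -2 * eps \<and> pick i = j}. - lam A m eps y i / A j i))"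

definition cover_output :: "(nat \<Rightarrow> nat \<Rightarrow> real) \<Rightarrow> nat \<Rightarrow> nat \<Rightarrow> real \<Rightarrow> (nat \<Rightarrow> nat) \<Rightarrow> nat list \<Rightarrow> nat \<Rightarrow> real" where
  "cover_output A m n eps pick ts = (\<lambda>j. alg2 A m n eps pick (ybar A m n eps ts) j / (1 - 3 * eps))"

text \<open>All possible random choice sequences (t_0,...,t_{T-1}); the uniform distribution on
this set is exactly T independent uniform choices from {0..w-1}.\<close>
definition choice_seqs :: "nat \<Rightarrow> nat \<Rightarrow> real \<Rightarrow> nat list set" where
  "choice_seqs m n eps = {ts. length ts = Tpar m n eps \<and> set ts \<subseteq> {..<wpar eps}}"

end

theory Submission
  imports Defs
begin


lemma exp_quad:
  fixes z :: real assumes "\<bar>z\<bar> \<le> 1" shows "exp z \<le> 1 + z + z\<^sup>2"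
proof (cases "z \<ge> 0")
  case True then show ?thesis using exp_bound[of z] assms by simp
next
  case False
  define u where "u = -z"
  have u: "0 \<le> u" "u \<le> 1" using False assms u_def by auto
  have e1: "(1 + u) * (1 - u + u\<^sup>2) = 1 + u^3" by (simp add: algebra_simps power2_eq_square power3_eq_cube)
  have e2: "1 \<le> 1 + u^3" using u by simp
  have h: "1 \<le> (1 + u) * (1 - u + u\<^sup>2)" using e1 e2 by linarith
  have q: "0 \<le> 1 - u + u\<^sup>2" using u by (simp add: power2_eq_square)
  have h2: "(1 + u) * (1 - u + u\<^sup>2) \<le> exp u * (1 - u + u\<^sup>2)"
    by (rule mult_right_mono[OF exp_ge_add_one_self q])
  have h3: "1 \<le> exp u * (1 - u + u\<^sup>2)" using h h2 by linarith
  have h4: "exp (-u) * exp u = 1" by (simp add: exp_minus_inverse mult.commute)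
  have h5: "exp (-u) \<le> exp (-u) * (exp u * (1 - u + u\<^sup>2))"
    using mult_left_mono[OF h3, of "exp (-u)"] by simp
  have h6: "exp (-u) * (exp u * (1 - u + u\<^sup>2)) = 1 - u + u\<^sup>2"
    by (simp only: mult.assoc[symmetric] h4) simp
  have "exp (-u) \<le> 1 - u + u\<^sup>2" using h5 h6 by linarith
  then show ?thesis by (simp add: u_def)
qed

lemma exp_ge_lin: "(z::real) \<le> exp z - 1" using exp_ge_add_one_self[of z] by linarith

lemma abs_exp_minus1:
  fixes z :: real assumes "\<bar>z\<bar> \<le> 1" shows "\<bar>exp z - 1\<bar> \<le> 2 * \<bar>z\<bar>"
proof -
  have a: "exp z - 1 \<le> z + z\<^sup>2" using exp_quad[OF assms] by simp
  have b: "z \<le> exp z - 1" by (rule exp_ge_lin)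
  have "z\<^sup>2 = \<bar>z\<bar> * \<bar>z\<bar>" by (simp add: power2_eq_square)
  also have "\<dots> \<le> \<bar>z\<bar>" using assms by (intro mult_left_le_one_le) auto
  finally have c: "z\<^sup>2 \<le> \<bar>z\<bar>" .
  show ?thesis using a b c by linarith
qed
lemma weighted_cs:
  fixes a c :: "'a \<Rightarrow> real"
  assumes "finite I" "\<And>i. i \<in> I \<Longrightarrow> 0 \<le> a i"
  shows "(\<Sum>i\<in>I. a i * c i)\<^sup>2 \<le> (\<Sum>i\<in>I. a i) * (\<Sum>i\<in>I. a i * (c i)\<^sup>2)"
proof (cases "(\<Sum>i\<in>I. a i) = 0")
  case True
  then have "\<forall>i\<in>I. a i = 0" using sum_nonneg_eq_0_iff[of I a] assms True by auto
  then show ?thesis by simp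
next
  case False
  define W where "W = (\<Sum>i\<in>I. a i)"
  define D where "D = (\<Sum>i\<in>I. a i * c i)"
  define Q where "Q = (\<Sum>i\<in>I. a i * (c i)\<^sup>2)"
  have Wpos: "W > 0" using False sum_nonneg[of I a] assms W_def by force
  have "0 \<le> (\<Sum>i\<in>I. a i * (c i - D / W)\<^sup>2)" using assms by (intro sum_nonneg) auto
  also have "\<dots> = (\<Sum>i\<in>I. a i * (c i)\<^sup>2 - 2 * (D/W) * (a i * c i) + (D/W)\<^sup>2 * a i)"
    by (intro sum.cong) (auto simp: power2_eq_square algebra_simps)
  also have "\<dots> = Q - 2 * (D/W) * D + (D/W)\<^sup>2 * W"
    by (simp add: sum_subtractf sum.distrib sum_distrib_left Q_def D_def W_def)
  also have "\<dots> = Q - D\<^sup>2 / W" using Wpos by (simp add: power2_eq_square field_simps)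
  finally have "D\<^sup>2 / W \<le> Q" by simp
  then have "D\<^sup>2 \<le> W * Q" using Wpos by (simp add: field_simps)
  then show ?thesis by (simp add: W_def D_def Q_def)
qed

definition Ls :: "nat \<Rightarrow> nat \<Rightarrow> nat list set" where
  "Ls w k = {ts. length ts = k \<and> set ts \<subseteq> {..<w}}"

lemma Ls_finite: "finite (Ls w k)"
  using finite_lists_length_eq[of "{..<w}" k] unfolding Ls_def by (simp add: conj_commute)

lemma Ls_card: "card (Ls w k) = w ^ k"
  using card_lists_length_eq[of "{..<w}" k] unfolding Ls_def by (simp add: conj_commute)

lemma Ls_Suc: "Ls w (Suc k) = (\<lambda>(pre, t). pre @ [t]) ` (Ls w k \<times> {..<w})"
proof (intro set_eqI iffI)
  fix ts assume "ts \<in> Ls w (Suc k)"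
  then have "length ts = Suc k" "set ts \<subseteq> {..<w}" by (auto simp: Ls_def)
  then obtain pre t where "ts = pre @ [t]" by (metis length_Suc_conv_rev)
  then show "ts \<in> (\<lambda>(pre, t). pre @ [t]) ` (Ls w k \<times> {..<w})"
    using \<open>length ts = Suc k\<close> \<open>set ts \<subseteq> _\<close> by (force simp: Ls_def)
qed (auto simp: Ls_def)

lemma Ls_inj: "inj_on (\<lambda>(pre, t). pre @ [t]) (Ls w k \<times> {..<w})"
  by (auto simp: inj_on_def)

lemma sum_Ls_Suc: "(\<Sum>ts\<in>Ls w (Suc k). F ts) = (\<Sum>pre\<in>Ls w k. \<Sum>t<w. F (pre @ [t]))"
  unfolding Ls_Suc by (subst sum.reindex[OF Ls_inj]) (simp add: sum.cartesian_product split_def)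

lemma supermart:
  fixes F :: "nat list \<Rightarrow> real"
  assumes "\<And>k pre. k < N \<Longrightarrow> pre \<in> Ls w k \<Longrightarrow> (\<Sum>t<w. F (pre @ [t])) \<le> real w * F pre"
  shows "(\<Sum>ts\<in>Ls w N. F ts) \<le> real w ^ N * F []"
  using assms
proof (induction N)
  case 0
  have "Ls w 0 = {[]}" by (auto simp: Ls_def)
  then show ?case by simp
next
  case (Suc N)
  have "(\<Sum>ts\<in>Ls w (Suc N). F ts) = (\<Sum>pre\<in>Ls w N. \<Sum>t<w. F (pre @ [t]))" by (rule sum_Ls_Suc)
  also have "\<dots> \<le> (\<Sum>pre\<in>Ls w N. real w * F pre)" using Suc.prems by (intro sum_mono) auto
  also have "\<dots> = real w * (\<Sum>pre\<in>Ls w N. F pre)" by (simp add: sum_distrib_left)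
  also have "\<dots> \<le> real w * (real w ^ N * F [])"
  proof -
    have "sum F (Ls w N) \<le> real w ^ N * F []" apply (rule Suc.IH) apply (rule Suc.prems) by auto
    then show ?thesis by (intro mult_left_mono) auto
  qed
  finally show ?case by simp
qed

lemma markov_count:
  fixes F :: "'a \<Rightarrow> real"
  assumes "finite S" "\<And>x. x \<in> S \<Longrightarrow> 0 \<le> F x" "B \<subseteq> S" "\<And>x. x \<in> B \<Longrightarrow> a \<le> F x"
  shows "real (card B) * a \<le> (\<Sum>x\<in>S. F x)"
proof -
  have "real (card B) * a = (\<Sum>x\<in>B. a)" by simp
  also have "\<dots> \<le> (\<Sum>x\<in>B. F x)" using assms by (intro sum_mono) auto
  also have "\<dots> \<le> (\<Sum>x\<in>S. F x)" using assms by (intro sum_mono2) (auto intro: finite_subset)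
  finally show ?thesis .
qed


lemma clip_props:
  fixes e g :: real
  assumes "0 < e" "e < 1" "-1 \<le> g"
  defines "c \<equiv> clip e g"
  shows "\<bar>c\<bar> \<le> 1" "c * g \<ge> c\<^sup>2" "c \<le> g + e" "c = 0 \<or> e < \<bar>c\<bar>"
    "c\<^sup>2 * (g + 1) \<le> 2 * (c * g)" "g \<le> c + e + c * g" "0 \<le> c * g"
  using assms unfolding c_def clip_def
  by (auto simp: power2_eq_square abs_if mult_le_cancel_left1 mult_le_cancel_right1 not_le
      intro: mult_nonneg_nonneg mult_nonpos_nonpos)

lemma bucket_cases: "bucket e t v = v \<or> bucket e t v = 0"
  unfolding bucket_def by auto

lemma bucket_sum_gen:
  fixes v e :: real and \<phi> :: "real \<Rightarrow> real"
  assumes "e < \<bar>v\<bar>" "0 \<le> e"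
  shows "(\<Sum>t<w. \<phi> (bucket e t v) - \<phi> 0) = (if \<bar>v\<bar> \<le> e * 2 ^ w then \<phi> v - \<phi> 0 else 0)"
proof (induction w)
  case 0 then show ?case using assms by simp
next
  case (Suc w)
  have "(\<Sum>t<Suc w. \<phi> (bucket e t v) - \<phi> 0) = (\<Sum>t<w. \<phi> (bucket e t v) - \<phi> 0) + (\<phi> (bucket e w v) - \<phi> 0)"
    by simp
  also have "\<dots> = (if \<bar>v\<bar> \<le> e * 2 ^ Suc w then \<phi> v - \<phi> 0 else 0)"
  proof -
    have b: "bucket e w v = (if e * 2 ^ w < \<bar>v\<bar> \<and> \<bar>v\<bar> \<le> e * 2 ^ Suc w then v else 0)"
      by (simp add: bucket_def)
    have m: "e * 2 ^ w \<le> e * 2 ^ Suc w" using assms by (intro mult_left_mono) auto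
    show ?thesis unfolding Suc.IH b using m
      by (cases "\<bar>v\<bar> \<le> e * 2 ^ w"; cases "\<bar>v\<bar> \<le> e * 2 ^ Suc w") auto
  qed
  finally show ?case .
qed

lemma bucket_sum_phi:
  fixes v e :: real and \<phi> :: "real \<Rightarrow> real"
  assumes "v = 0 \<or> e < \<bar>v\<bar>" "\<bar>v\<bar> \<le> 1" "1 \<le> e * 2 ^ w"
  shows "(\<Sum>t<w. \<phi> (bucket e t v) - \<phi> 0) = \<phi> v - \<phi> 0"
  using assms(1)
proof (elim disjE)
  assume "v = 0" then show ?thesis by (simp add: bucket_def)
next
  assume "e < \<bar>v\<bar>"
  have "0 < e * 2 ^ w" using assms(3) by linarith
  then have "0 < e" by (rule zero_less_mult_pos2) simp
  then show ?thesis using bucket_sum_gen[of e v \<phi> w] assms \<open>e < \<bar>v\<bar>\<close> by simp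
qed

lemma bucket_sum_lin:
  fixes v e :: real and \<phi> :: "real \<Rightarrow> real"
  assumes "v = 0 \<or> e < \<bar>v\<bar>" "\<bar>v\<bar> \<le> 1" "1 \<le> e * 2 ^ w" "\<phi> 0 = 0"
  shows "(\<Sum>t<w. \<phi> (bucket e t v)) = \<phi> v"
  using bucket_sum_phi[OF assms(1-3), of \<phi>] assms(4) by simp

lemma bucket_sum_exp:
  fixes v e a :: real
  assumes "v = 0 \<or> e < \<bar>v\<bar>" "\<bar>v\<bar> \<le> 1" "1 \<le> e * 2 ^ w"
  shows "(\<Sum>t<w. exp (a * bucket e t v)) = real w + (exp (a * v) - 1)"
proof -
  have "(\<Sum>t<w. exp (a * bucket e t v) - exp (a * 0)) = exp (a * v) - exp (a * 0)"
    by (rule bucket_sum_phi[OF assms, of "\<lambda>b. exp (a * b)"])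
  then show ?thesis by (simp add: sum_subtractf)
qed

locale lpset =
  fixes A :: "nat \<Rightarrow> nat \<Rightarrow> real" and m n :: nat and eps :: real
  assumes npos: "0 < n"
  and Anonneg: "\<And>j i. j < m \<Longrightarrow> i < n \<Longrightarrow> 0 \<le> A j i"
  and colnz: "\<And>i. i < n \<Longrightarrow> \<exists>j<m. A j i \<noteq> 0"
  and minc: "Min (colnorm A m ` {..<n}) = 1"
  and epos: "0 < eps" and esmall: "eps \<le> 1/30"
begin

lemma mpos: "0 < m" using colnz[OF npos] by auto

lemma colnorm_attain: "i < n \<Longrightarrow> \<exists>j<m. A j i = colnorm A m i"
proof -
  assume i: "i < n"
  have "colnorm A m i \<in> (\<lambda>j. \<bar>A j i\<bar>) ` {..<m}" unfolding colnorm_def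
    using mpos by (intro Max_in) auto
  then obtain j where "j < m" "colnorm A m i = \<bar>A j i\<bar>" by auto
  then show ?thesis using Anonneg[OF _ i] by (intro exI[of _ j]) auto
qed

lemma A_le_col: "j < m \<Longrightarrow> i < n \<Longrightarrow> A j i \<le> colnorm A m i"
  unfolding colnorm_def by (rule order.trans[OF abs_ge_self], intro Max_ge) auto

lemma col_ge1: "i < n \<Longrightarrow> 1 \<le> colnorm A m i"
  using Min_le[of "colnorm A m ` {..<n}" "colnorm A m i"] minc by auto

lemma col_one: "\<exists>i0<n. colnorm A m i0 = 1"
proof -
  have "Min (colnorm A m ` {..<n}) \<in> colnorm A m ` {..<n}" using npos by (intro Min_in) auto
  then show ?thesis using minc by auto
qed

definition Lg where "Lg = ln (real n * real m / eps)"

lemma ln_inv_eps_ge3: "3 \<le> ln (1 / eps)"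
proof -
  have "exp (1::real) \<le> 3" using exp_bound[of 1] by simp
  then have "exp (1::real) ^ 3 \<le> 3 ^ 3" by (intro power_mono) auto
  then have "exp (3::real) \<le> 27" using exp_of_nat_mult[of 3 "1::real"] by simp
  also have "27 \<le> 1 / eps" using esmall epos by (simp add: field_simps)
  finally show ?thesis using epos by (subst ln_ge_iff) auto
qed

lemma Lg_ge: "ln (1 / eps) \<le> Lg" "ln (real n / eps) \<le> Lg"
proof -
  have nm: "1 \<le> real n * real m" using npos mpos
    by (metis One_nat_def Suc_leI nat_mult_1 of_nat_1 of_nat_le_iff of_nat_mult mult_le_mono)
  have "1 / eps \<le> real n * real m / eps" using nm epos by (simp add: divide_right_mono)
  moreover have "0 < real n * real m / eps" using nm epos by simp
  ultimately show "ln (1 / eps) \<le> Lg" unfolding Lg_def using epos by (subst ln_le_cancel_iff) auto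
  have "real n * 1 \<le> real n * real m" using mpos by (intro mult_left_mono) auto
  then have "real n / eps \<le> real n * real m / eps" using epos by (simp add: divide_right_mono)
  moreover have "0 < real n * real m / eps" using nm epos by simp
  ultimately show "ln (real n / eps) \<le> Lg" unfolding Lg_def using epos npos by (subst ln_le_cancel_iff) auto
qed

lemma Lg_ge3: "3 \<le> Lg" using Lg_ge(1) ln_inv_eps_ge3 by linarith

lemma mu_eq: "mu m n eps = eps / (4 * Lg)" unfolding mu_def Lg_def by simp
lemma alpha_eq: "alpha m n eps = eps / (80 * Lg)" unfolding alpha_def mu_eq by simp
lemma mu_pos: "0 < mu m n eps" using mu_eq epos Lg_ge3 by simp
lemma alpha_pos: "0 < alpha m n eps" using alpha_eq epos Lg_ge3 by simp
lemma alpha_le: "alpha m n eps \<le> eps / 240"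
  unfolding alpha_eq by (rule divide_left_mono) (use Lg_ge3 epos in auto)
lemma alpha_mu: "alpha m n eps = mu m n eps / 20" unfolding alpha_def ..

lemma exp_neg_mu: "real m * exp (- eps / mu m n eps) \<le> eps"
proof -
  have "- eps / mu m n eps = - 4 * Lg" using mu_eq epos Lg_ge3 by simp
  then have "exp (- eps / mu m n eps) \<le> exp (- Lg)" using Lg_ge3 by simp
  also have "exp (- Lg) = eps / (real n * real m)" unfolding Lg_def
    using npos mpos epos by (simp add: exp_minus exp_ln)
  finally have "real m * exp (- eps / mu m n eps) \<le> real m * (eps / (real n * real m))"
    using mpos by (intro mult_left_mono) auto
  also have "\<dots> = eps / real n" using mpos by simp
  also have "\<dots> \<le> eps" using npos epos by (simp add: divide_le_eq)
  finally show ?thesis .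
qed

abbreviation w where "w \<equiv> wpar eps"
abbreviation T where "T \<equiv> Tpar m n eps"

lemma log_ge: "log 2 (1/eps) > 4"
proof -
  have "(16::real) < 1/eps" using esmall epos by (simp add: field_simps)
  moreover have "2 powr (4::real) = 16" by (simp add: powr_numeral)
  ultimately show ?thesis using epos by (subst less_log_iff) auto
qed

lemma w_ge: "log 2 (1/eps) \<le> real w" "real w \<le> log 2 (1/eps) + 1"
  unfolding wpar_def using log_ge by (auto simp: of_nat_ceiling)

lemma w_ge5: "5 \<le> w"
proof -
  have "4 < real w" using w_ge log_ge by linarith
  then show ?thesis by linarith
qed

lemma w_cover: "1 \<le> eps * 2 ^ w"
proof -
  have "1/eps = 2 powr (log 2 (1/eps))" using epos by simp
  also have "\<dots> \<le> 2 powr (real w)" using w_ge by (intro powr_mono) auto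
  also have "\<dots> = 2 ^ w" by (simp add: powr_realpow)
  finally show ?thesis using epos by (simp add: field_simps)
qed

lemma w_le_Lg: "real w \<le> 2 * Lg"
proof -
  have "log 2 (1/eps) = ln (1/eps) / ln 2" by (simp add: log_def)
  also have "\<dots> \<le> ln (1/eps) / (2/3)" using ln2_ge_two_thirds ln_inv_eps_ge3
    by (intro divide_left_mono) auto
  finally have "real w \<le> 3/2 * ln (1/eps) + 1" using w_ge by simp
  then show ?thesis using Lg_ge Lg_ge3 by linarith
qed

lemma alpha_w: "alpha m n eps * real w \<le> eps / 40"
proof -
  have "alpha m n eps * real w \<le> eps / (80 * Lg) * (2 * Lg)"
    unfolding alpha_eq using w_le_Lg epos Lg_ge3 by (intro mult_left_mono) auto
  also have "\<dots> = eps / 40" using Lg_ge3 by simp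
  finally show ?thesis .
qed

lemma T_ge: "6 * real w * ln (2 * real n) / (alpha m n eps * eps) \<le> real T"
  "2 * real w ^ 2 * ln (real n / eps) / eps ^ 2 \<le> real T"
  unfolding Tpar_def by (auto intro: order.trans[OF _ of_nat_ceiling])

lemma ln2n: "2/3 \<le> ln (2 * real n)"
proof -
  have "ln 2 \<le> ln (2 * real n)" using npos by (subst ln_le_cancel_iff) auto
  then show ?thesis using ln2_ge_two_thirds by linarith
qed

lemma T_pos: "0 < T"
proof -
  have "0 < 6 * real w * ln (2 * real n) / (alpha m n eps * eps)"
    using w_ge5 ln2n alpha_pos epos by (intro divide_pos_pos mult_pos_pos) auto
  then show ?thesis using T_ge(1) by linarith
qed

lemma wT: "real w / (alpha m n eps * real T) \<le> eps / 4"
proof -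
  have pos: "0 < alpha m n eps * eps" using alpha_pos epos by simp
  have "6 * real w * ln (2 * real n) \<le> real T * (alpha m n eps * eps)"
    using T_ge(1) pos by (simp add: divide_le_eq)
  moreover have "4 * real w \<le> 6 * real w * ln (2 * real n)"
  proof -
    have "real w * 4 \<le> real w * (6 * ln (2 * real n))" using ln2n by (intro mult_left_mono) auto
    then show ?thesis by (simp add: mult_ac)
  qed
  ultimately have "4 * real w \<le> real T * alpha m n eps * eps" by (simp add: mult.assoc)
  then show ?thesis using alpha_pos T_pos epos by (simp add: field_simps)
qed

end


context lpset begin

abbreviation ax where "ax x j \<equiv> Amul A n x j"
abbreviation p where "p x j \<equiv> pvec A m n eps x j"
abbreviation g where "g x i \<equiv> grad A m n eps x i"
abbreviation xi where "xi x i \<equiv> clip eps (g x i)"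
abbreviation eta where "eta t x i \<equiv> bucket eps t (xi x i)"
abbreviation \<mu> where "\<mu> \<equiv> mu m n eps"
abbreviation \<alpha> where "\<alpha> \<equiv> alpha m n eps"

definition sx :: "(nat \<Rightarrow> real) \<Rightarrow> real" where "sx x = (\<Sum>i<n. x i)"
definition f :: "(nat \<Rightarrow> real) \<Rightarrow> real" where "f x = - sx x + \<mu> * (\<Sum>j<m. p x j)"

lemma p_pos: "0 < p x j" unfolding pvec_def by simp

lemma g_plus1: "g x i + 1 = (\<Sum>j<m. A j i * p x j)" unfolding grad_def by simp

lemma g_ge: "i < n \<Longrightarrow> -1 \<le> g x i"
proof -
  assume i: "i < n"
  have "0 \<le> (\<Sum>j<m. A j i * p x j)" using Anonneg[OF _ i] p_pos by (intro sum_nonneg mult_nonneg_nonneg) (auto intro: less_imp_le)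
  then show ?thesis using g_plus1[of x i] by linarith
qed

lemma eps_lt1: "eps < 1" using esmall by simp

lemma xi_props: assumes "i < n"
  shows "\<bar>xi x i\<bar> \<le> 1" "xi x i * g x i \<ge> (xi x i)\<^sup>2" "xi x i \<le> g x i + eps"
    "xi x i = 0 \<or> eps < \<bar>xi x i\<bar>" "(xi x i)\<^sup>2 * (g x i + 1) \<le> 2 * (xi x i * g x i)"
    "g x i \<le> xi x i + eps + xi x i * g x i" "0 \<le> xi x i * g x i"
  using clip_props[OF epos eps_lt1 g_ge[OF assms]] by auto

lemma eta_props: assumes "i < n"
  shows "\<bar>eta t x i\<bar> \<le> 1" "eta t x i * g x i \<ge> (eta t x i)\<^sup>2"
    "(eta t x i)\<^sup>2 * (g x i + 1) \<le> 2 * (eta t x i * g x i)" "0 \<le> eta t x i * g x i"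
  using xi_props[OF assms, of x] bucket_cases[of eps t "xi x i"] by (auto simp del: power2_eq_square)

lemma sum_p_ax: "(\<Sum>j<m. p x j * ax x j) = (\<Sum>i<n. x i * (g x i + 1))"
proof -
  have "(\<Sum>j<m. p x j * ax x j) = (\<Sum>j<m. \<Sum>i<n. p x j * (A j i * x i))"
    unfolding Amul_def by (simp add: sum_distrib_left)
  also have "\<dots> = (\<Sum>i<n. \<Sum>j<m. p x j * (A j i * x i))" by (rule sum.swap)
  also have "\<dots> = (\<Sum>i<n. x i * (\<Sum>j<m. A j i * p x j))"
    by (simp add: sum_distrib_left mult_ac)
  finally show ?thesis by (simp add: g_plus1)
qed

lemma descent:
  assumes xpos: "\<And>i. i < n \<Longrightarrow> 0 < x i" and axle: "\<And>j. j < m \<Longrightarrow> ax x j \<le> 2"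
  shows "f (alg1_step A m n eps t x) \<le> f x - \<alpha> / 10 * (\<Sum>i<n. x i * (eta t x i * g x i))"
proof -
  define x' where "x' = alg1_step A m n eps t x"
  define \<eta> where "\<eta> i = eta t x i" for i
  define c where "c i = exp (- \<alpha> * \<eta> i) - 1" for i
  define S where "S = (\<Sum>i<n. x i * (\<eta> i * g x i))"
  have al: "0 < \<alpha>" "\<alpha> \<le> 1/240" using alpha_pos alpha_le esmall by auto
  have mu: "0 < \<mu>" using mu_pos .
  have am: "\<alpha> / \<mu> = 1/20" using alpha_mu mu by simp
  have x'c: "x' i = x i + x i * c i" for i unfolding x'_def alg1_step_def c_def \<eta>_def by (simp add: algebra_simps)
  have ep: "\<bar>\<eta> i\<bar> \<le> 1" "\<eta> i * g x i \<ge> (\<eta> i)\<^sup>2" "(\<eta> i)\<^sup>2 * (g x i + 1) \<le> 2 * (\<eta> i * g x i)"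
    "0 \<le> \<eta> i * g x i" if "i < n" for i
    using eta_props[OF that] unfolding \<eta>_def by auto
  have Snn: "0 \<le> S" unfolding S_def
  proof (intro sum_nonneg)
    fix i assume "i \<in> {..<n}"
    then have i: "i < n" by simp
    show "0 \<le> x i * (\<eta> i * g x i)" by (rule mult_nonneg_nonneg[OF less_imp_le[OF xpos[OF i]] ep(4)[OF i]])
  qed
  have aeta: "\<bar>- \<alpha> * \<eta> i\<bar> \<le> \<alpha>" if "i < n" for i
    using ep(1)[OF that] al by (simp add: abs_mult mult_left_le)
  have c_abs: "\<bar>c i\<bar> \<le> 2 * \<alpha> * \<bar>\<eta> i\<bar>" if "i < n" for i
  proof -
    have "\<bar>c i\<bar> \<le> 2 * \<bar>- \<alpha> * \<eta> i\<bar>" unfolding c_def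
      by (rule abs_exp_minus1) (use aeta[OF that] al in linarith)
    then show ?thesis using al by (simp add: abs_mult)
  qed
  have c_abs2: "\<bar>c i\<bar> \<le> 2 * \<alpha>" if "i < n" for i
    using c_abs[OF that] ep(1)[OF that] al by (smt (verit) mult_left_le)
  have c_sq: "(c i)\<^sup>2 \<le> 4 * \<alpha>\<^sup>2 * (\<eta> i)\<^sup>2" if "i < n" for i
  proof -
    have "(c i)\<^sup>2 = \<bar>c i\<bar>\<^sup>2" by simp
    also have "\<dots> \<le> (2 * \<alpha> * \<bar>\<eta> i\<bar>)\<^sup>2" using c_abs[OF that] by (intro power_mono) auto
    also have "\<dots> = 4 * \<alpha>\<^sup>2 * (\<eta> i)\<^sup>2" by (simp add: power_mult_distrib)
    finally show ?thesis .
  qed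
  have cg: "c i * g x i \<le> - \<alpha> * (1 - \<alpha>) * (\<eta> i * g x i)" if i: "i < n" for i
  proof (cases "\<eta> i > 0")
    case True
    have gp: "0 < g x i"
    proof -
      have "0 < (\<eta> i)\<^sup>2" using True by simp
      then have "0 < \<eta> i * g x i" using ep(2)[OF i] by linarith
      then show ?thesis using True by (simp add: zero_less_mult_iff)
    qed
    have "c i \<le> - \<alpha> * \<eta> i + (- \<alpha> * \<eta> i)\<^sup>2" unfolding c_def
      using exp_quad[of "- \<alpha> * \<eta> i"] aeta[OF i] al by simp
    then have "c i * g x i \<le> (- \<alpha> * \<eta> i + (- \<alpha> * \<eta> i)\<^sup>2) * g x i"
      using gp by (intro mult_right_mono) auto
    also have "\<dots> = - \<alpha> * (\<eta> i * g x i) + \<alpha>\<^sup>2 * \<eta> i * (\<eta> i * g x i)"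
      by (simp add: power2_eq_square algebra_simps)
    also have "\<dots> \<le> - \<alpha> * (\<eta> i * g x i) + \<alpha>\<^sup>2 * (\<eta> i * g x i)"
    proof -
      have "\<eta> i * (\<eta> i * g x i) \<le> 1 * (\<eta> i * g x i)"
        using ep(1,4)[OF i] by (intro mult_right_mono) auto
      then show ?thesis by (simp add: mult.assoc mult_left_mono)
    qed
    also have "\<dots> = - \<alpha> * (1 - \<alpha>) * (\<eta> i * g x i)" by (simp add: power2_eq_square algebra_simps)
    finally show ?thesis .
  next
    case False
    show ?thesis
    proof (cases "\<eta> i = 0")
      case True then show ?thesis unfolding c_def by simp
    next
      case False2: False
      then have neg: "\<eta> i < 0" using False by simp
      have gn: "g x i < 0"
      proof -
        have "0 < (\<eta> i)\<^sup>2" using neg by simp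
        then have "0 < \<eta> i * g x i" using ep(2)[OF i] by linarith
        then show ?thesis using neg by (simp add: zero_less_mult_iff)
      qed
      have "- \<alpha> * \<eta> i \<le> c i" unfolding c_def by (rule exp_ge_lin)
      then have "c i * g x i \<le> (- \<alpha> * \<eta> i) * g x i" using gn by (intro mult_right_mono_neg) auto
      also have "\<dots> \<le> - \<alpha> * (1 - \<alpha>) * (\<eta> i * g x i)"
      proof -
        have "0 \<le> \<alpha> * \<alpha> * (\<eta> i * g x i)" using ep(4)[OF i] al by simp
        then show ?thesis by (simp add: algebra_simps)
      qed
      finally show ?thesis .
    qed
  qed
  define d where "d j = ax x' j - ax x j" for j
  have d_eq: "d j = (\<Sum>i<n. (A j i * x i) * c i)" for j
    unfolding d_def Amul_def x'c by (simp add: sum_subtractf[symmetric] algebra_simps)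
  have d_abs: "\<bar>d j\<bar> \<le> 4 * \<alpha>" if j: "j < m" for j
  proof -
    have "\<bar>d j\<bar> \<le> (\<Sum>i<n. \<bar>(A j i * x i) * c i\<bar>)" unfolding d_eq by (rule sum_abs)
    also have "\<dots> \<le> (\<Sum>i<n. (A j i * x i) * (2 * \<alpha>))"
    proof (intro sum_mono)
      fix i assume "i \<in> {..<n}"
      then have i: "i < n" by simp
      have "0 \<le> A j i * x i" using Anonneg[OF j i] xpos[OF i] by simp
      moreover have "\<bar>A j i * x i * c i\<bar> = (A j i * x i) * \<bar>c i\<bar>"
        by (metis abs_mult abs_of_nonneg \<open>0 \<le> A j i * x i\<close>)
      ultimately show "\<bar>A j i * x i * c i\<bar> \<le> A j i * x i * (2 * \<alpha>)"
        using c_abs2[OF i] by (simp add: mult_left_mono)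
    qed
    also have "\<dots> = 2 * \<alpha> * ax x j" unfolding Amul_def by (simp add: sum_distrib_left mult_ac)
    also have "\<dots> \<le> 2 * \<alpha> * 2" using axle[OF j] al by (intro mult_left_mono) auto
    finally show ?thesis by simp
  qed
  have p'_eq: "p x' j = p x j * exp (d j / \<mu>)" for j
  proof -
    have "(ax x' j - 1) / \<mu> = (ax x j - 1) / \<mu> + d j / \<mu>" unfolding d_def by (simp add: diff_divide_distrib)
    then show ?thesis unfolding pvec_def by (simp add: exp_add)
  qed
  have pexp: "\<mu> * (p x' j - p x j) \<le> p x j * d j + p x j * (d j)\<^sup>2 / \<mu>" if j: "j < m" for j
  proof -
    have "\<bar>d j / \<mu>\<bar> \<le> 1"
    proof -
      have "\<bar>d j / \<mu>\<bar> = \<bar>d j\<bar> / \<mu>" using mu by simp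
      also have "\<dots> \<le> 4 * \<alpha> / \<mu>" using d_abs[OF j] mu by (intro divide_right_mono) auto
      also have "\<dots> = 1/5" using am by simp
      finally show ?thesis by linarith
    qed
    then have "exp (d j / \<mu>) \<le> 1 + d j / \<mu> + (d j / \<mu>)\<^sup>2" by (rule exp_quad)
    then have e: "exp (d j / \<mu>) - 1 \<le> d j / \<mu> + (d j / \<mu>)\<^sup>2" by linarith
    have "\<mu> * (p x' j - p x j) = \<mu> * p x j * (exp (d j / \<mu>) - 1)" unfolding p'_eq by (simp add: algebra_simps)
    also have "\<dots> \<le> \<mu> * p x j * (d j / \<mu> + (d j / \<mu>)\<^sup>2)"
      using e mu p_pos[of x j] by (intro mult_left_mono) auto
    also have "\<dots> = p x j * d j + p x j * (d j)\<^sup>2 / \<mu>" using mu by (simp add: power2_eq_square field_simps)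
    finally show ?thesis .
  qed
  have dsq: "(d j)\<^sup>2 \<le> 8 * \<alpha>\<^sup>2 * (\<Sum>i<n. A j i * x i * (\<eta> i)\<^sup>2)" if j: "j < m" for j
  proof -
    have a_nn: "0 \<le> A j i * x i" if "i \<in> {..<n}" for i using Anonneg[OF j] xpos that by (simp add: less_imp_le)
    have "(d j)\<^sup>2 \<le> (\<Sum>i<n. A j i * x i) * (\<Sum>i<n. A j i * x i * (c i)\<^sup>2)"
      unfolding d_eq by (rule weighted_cs) (use a_nn in auto)
    also have "\<dots> \<le> 2 * (\<Sum>i<n. A j i * x i * (4 * \<alpha>\<^sup>2 * (\<eta> i)\<^sup>2))"
    proof (rule mult_mono)
      show "(\<Sum>i<n. A j i * x i) \<le> 2" using axle[OF j] unfolding Amul_def .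
      show "(\<Sum>i<n. A j i * x i * (c i)\<^sup>2) \<le> (\<Sum>i<n. A j i * x i * (4 * \<alpha>\<^sup>2 * (\<eta> i)\<^sup>2))"
        using a_nn c_sq by (intro sum_mono mult_left_mono) auto
      show "0 \<le> (2::real)" by simp
      show "0 \<le> (\<Sum>i<n. A j i * x i * (c i)\<^sup>2)" using a_nn by (intro sum_nonneg) auto
    qed
    also have "\<dots> = 8 * \<alpha>\<^sup>2 * (\<Sum>i<n. A j i * x i * (\<eta> i)\<^sup>2)"
      by (simp add: sum_distrib_left mult_ac)
    finally show ?thesis .
  qed
  have sum_pd: "(\<Sum>j<m. p x j * d j) = (\<Sum>i<n. (x i * c i) * (g x i + 1))"
  proof -
    have "(\<Sum>j<m. p x j * d j) = (\<Sum>j<m. \<Sum>i<n. p x j * (A j i * x i * c i))"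
      unfolding d_eq by (simp add: sum_distrib_left)
    also have "\<dots> = (\<Sum>i<n. \<Sum>j<m. p x j * (A j i * x i * c i))" by (rule sum.swap)
    also have "\<dots> = (\<Sum>i<n. (x i * c i) * (\<Sum>j<m. A j i * p x j))"
      by (simp add: sum_distrib_left mult_ac)
    finally show ?thesis by (simp add: g_plus1)
  qed
  have sum_pd2: "(\<Sum>j<m. p x j * (\<Sum>i<n. A j i * x i * (\<eta> i)\<^sup>2)) = (\<Sum>i<n. x i * (\<eta> i)\<^sup>2 * (g x i + 1))"
  proof -
    have "(\<Sum>j<m. p x j * (\<Sum>i<n. A j i * x i * (\<eta> i)\<^sup>2)) = (\<Sum>j<m. \<Sum>i<n. p x j * (A j i * x i * (\<eta> i)\<^sup>2))"
      by (simp add: sum_distrib_left)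
    also have "\<dots> = (\<Sum>i<n. \<Sum>j<m. p x j * (A j i * x i * (\<eta> i)\<^sup>2))" by (rule sum.swap)
    also have "\<dots> = (\<Sum>i<n. x i * (\<eta> i)\<^sup>2 * (\<Sum>j<m. A j i * p x j))"
      by (simp add: sum_distrib_left mult_ac)
    finally show ?thesis by (simp add: g_plus1)
  qed
  have "f x' - f x = - (\<Sum>i<n. x i * c i) + (\<Sum>j<m. \<mu> * (p x' j - p x j))"
  proof -
    have a1: "sx x' = sx x + (\<Sum>i<n. x i * c i)" unfolding sx_def x'c by (simp add: sum.distrib)
    have a2: "(\<Sum>j<m. \<mu> * (p x' j - p x j)) = \<mu> * (\<Sum>j<m. p x' j) - \<mu> * (\<Sum>j<m. p x j)"
      by (simp add: sum_subtractf sum_distrib_left right_diff_distrib)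
    show ?thesis unfolding f_def using a1 a2 by linarith
  qed
  also have "\<dots> \<le> - (\<Sum>i<n. x i * c i) + (\<Sum>j<m. p x j * d j + p x j * (d j)\<^sup>2 / \<mu>)"
    using pexp by (intro add_left_mono sum_mono) auto
  also have "(\<Sum>j<m. p x j * d j + p x j * (d j)\<^sup>2 / \<mu>) \<le>
       (\<Sum>j<m. p x j * d j) + (\<Sum>j<m. p x j * (8 * \<alpha>\<^sup>2 * (\<Sum>i<n. A j i * x i * (\<eta> i)\<^sup>2))) / \<mu>"
  proof -
    have "(\<Sum>j<m. p x j * (d j)\<^sup>2 / \<mu>) \<le> (\<Sum>j<m. p x j * (8 * \<alpha>\<^sup>2 * (\<Sum>i<n. A j i * x i * (\<eta> i)\<^sup>2)) / \<mu>)"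
      using dsq mu p_pos by (intro sum_mono divide_right_mono mult_left_mono) (auto intro: less_imp_le)
    then show ?thesis by (simp add: sum.distrib sum_divide_distrib)
  qed
  also have "(\<Sum>j<m. p x j * (8 * \<alpha>\<^sup>2 * (\<Sum>i<n. A j i * x i * (\<eta> i)\<^sup>2))) =
      8 * \<alpha>\<^sup>2 * (\<Sum>i<n. x i * (\<eta> i)\<^sup>2 * (g x i + 1))"
    unfolding sum_pd2[symmetric] by (simp add: sum_distrib_left mult_ac)
  finally have st1: "f x' - f x \<le> - (\<Sum>i<n. x i * c i) + ((\<Sum>i<n. (x i * c i) * (g x i + 1)) +
      8 * \<alpha>\<^sup>2 * (\<Sum>i<n. x i * (\<eta> i)\<^sup>2 * (g x i + 1)) / \<mu>)"
    unfolding sum_pd by simp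
  have st2: "- (\<Sum>i<n. x i * c i) + (\<Sum>i<n. (x i * c i) * (g x i + 1)) = (\<Sum>i<n. x i * (c i * g x i))"
  proof -
    have "(\<Sum>i<n. (x i * c i) * (g x i + 1)) = (\<Sum>i<n. x i * (c i * g x i) + x i * c i)"
      by (intro sum.cong) (auto simp: algebra_simps)
    also have "\<dots> = (\<Sum>i<n. x i * (c i * g x i)) + (\<Sum>i<n. x i * c i)" by (rule sum.distrib)
    finally show ?thesis by linarith
  qed
  have st3: "(\<Sum>i<n. x i * (c i * g x i)) \<le> - \<alpha> * (1 - \<alpha>) * S"
  proof -
    have "(\<Sum>i<n. x i * (c i * g x i)) \<le> (\<Sum>i<n. x i * (- \<alpha> * (1 - \<alpha>) * (\<eta> i * g x i)))"
      using cg xpos by (intro sum_mono mult_left_mono) (auto intro: less_imp_le)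
    then show ?thesis unfolding S_def by (simp add: sum_distrib_left mult_ac)
  qed
  have st4: "(\<Sum>i<n. x i * (\<eta> i)\<^sup>2 * (g x i + 1)) \<le> 2 * S"
  proof -
    have "(\<Sum>i<n. x i * (\<eta> i)\<^sup>2 * (g x i + 1)) \<le> (\<Sum>i<n. x i * (2 * (\<eta> i * g x i)))"
      using ep(3) xpos by (simp only: mult.assoc) (intro sum_mono mult_left_mono, auto intro: less_imp_le)
    then show ?thesis unfolding S_def by (simp add: sum_distrib_left mult_ac)
  qed
  have st5: "8 * \<alpha>\<^sup>2 * (\<Sum>i<n. x i * (\<eta> i)\<^sup>2 * (g x i + 1)) / \<mu> \<le> 4/5 * \<alpha> * S"
  proof -
    have "8 * \<alpha>\<^sup>2 * (\<Sum>i<n. x i * (\<eta> i)\<^sup>2 * (g x i + 1)) / \<mu> \<le> 8 * \<alpha>\<^sup>2 * (2 * S) / \<mu>"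
      using st4 al mu by (intro divide_right_mono mult_left_mono) auto
    also have "\<dots> = 16 * \<alpha> * S * (\<alpha> / \<mu>)" by (simp add: power2_eq_square)
    also have "\<dots> = 4/5 * \<alpha> * S" using am by simp
    finally show ?thesis .
  qed
  have "f x' - f x \<le> - \<alpha> * (1 - \<alpha>) * S + 4/5 * \<alpha> * S" using st1 st2 st3 st5 by linarith
  also have "\<dots> \<le> - \<alpha> / 10 * S"
  proof -
    have "\<alpha> * \<alpha> * S \<le> \<alpha> * (1/10) * S" using al Snn by (intro mult_right_mono mult_left_mono) auto
    then show ?thesis by (simp add: algebra_simps)
  qed
  finally show ?thesis unfolding x'_def S_def \<eta>_def by simp
qed

end


context lpset begin

definition inv :: "(nat \<Rightarrow> real) \<Rightarrow> bool" where
  "inv x \<longleftrightarrow> (\<forall>i<n. 0 < x i) \<and> (\<forall>j<m. ax x j \<le> 1 + 2 * eps) \<and> f x \<le> eps"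

lemma exp_neg_mu_half: "real m * exp (- (eps / 2) / \<mu>) \<le> eps"
proof -
  have "- (eps / 2) / \<mu> = - 2 * Lg" using mu_eq epos Lg_ge3 by simp
  then have "exp (- (eps / 2) / \<mu>) \<le> exp (- Lg)" using Lg_ge3 by simp
  also have "exp (- Lg) = eps / (real n * real m)" unfolding Lg_def
    using npos mpos epos by (simp add: exp_minus)
  finally have "real m * exp (- (eps / 2) / \<mu>) \<le> real m * (eps / (real n * real m))"
    using mpos by (intro mult_left_mono) auto
  also have "\<dots> = eps / real n" using mpos by simp
  also have "\<dots> \<le> eps" using npos epos by (simp add: divide_le_eq)
  finally show ?thesis .
qed

lemma mu_le: "\<mu> \<le> 1" using mu_eq epos Lg_ge3 esmall by (simp add: divide_le_eq)

lemma ax_nonneg: "(\<And>i. i < n \<Longrightarrow> 0 \<le> x i) \<Longrightarrow> j < m \<Longrightarrow> 0 \<le> ax x j"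
  unfolding Amul_def using Anonneg by (intro sum_nonneg mult_nonneg_nonneg) auto

lemma x_le_ax: assumes "\<And>i. i < n \<Longrightarrow> 0 \<le> x i" "i < n" shows "\<exists>j<m. x i \<le> ax x j"
proof -
  obtain j where j: "j < m" "A j i = colnorm A m i" using colnorm_attain[OF assms(2)] by auto
  have "A j i * x i \<le> ax x j" unfolding Amul_def
    using assms Anonneg[OF j(1)] by (intro member_le_sum[of i "{..<n}" "\<lambda>i. A j i * x i"]) auto
  moreover have "1 * x i \<le> A j i * x i" using j col_ge1[OF assms(2)] assms
    by (intro mult_right_mono) auto
  ultimately show ?thesis using j by (intro exI[of _ j]) auto
qed

lemma inv_x0: "inv (x0 A m n eps)"
proof -
  let ?x = "x0 A m n eps"
  have pos: "0 < ?x i" if "i < n" for i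
    unfolding x0_def using col_ge1[OF that] npos esmall by (intro divide_pos_pos mult_pos_pos) auto
  have axl: "ax ?x j \<le> 1 - eps / 2" if j: "j < m" for j
  proof -
    have "ax ?x j \<le> (\<Sum>i<n. (1 - eps / 2) / real n)" unfolding Amul_def
    proof (intro sum_mono)
      fix i assume "i \<in> {..<n}" then have i: "i < n" by simp
      have c1: "1 \<le> colnorm A m i" by (rule col_ge1[OF i])
      have "A j i * ?x i = (1 - eps/2) / real n * (A j i / colnorm A m i)"
        unfolding x0_def by (simp add: field_simps)
      also have "\<dots> \<le> (1 - eps/2) / real n * 1"
        using A_le_col[OF j i] c1 esmall npos by (intro mult_left_mono) (auto simp: divide_le_eq)
      finally show "A j i * ?x i \<le> (1 - eps / 2) / real n" by simp
    qed
    also have "\<dots> = 1 - eps / 2" using npos by simp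
    finally show ?thesis .
  qed
  have fx: "f ?x \<le> eps"
  proof -
    have "sx ?x \<ge> 0" unfolding sx_def using pos by (intro sum_nonneg) (auto intro: less_imp_le)
    moreover have "(\<Sum>j<m. p ?x j) \<le> (\<Sum>j<m. exp (- (eps / 2) / \<mu>))"
    proof (intro sum_mono)
      fix j assume jm: "j \<in> {..<m}"
      have "(ax ?x j - 1) / \<mu> \<le> - (eps / 2) / \<mu>" using axl[of j] mu_pos jm by (intro divide_right_mono) auto
      then show "p ?x j \<le> exp (- (eps / 2) / \<mu>)" unfolding pvec_def by simp
    qed
    then have "(\<Sum>j<m. p ?x j) \<le> eps" using exp_neg_mu_half by simp
    then have "\<mu> * (\<Sum>j<m. p ?x j) \<le> 1 * eps" using mu_le mu_pos epos
      by (intro mult_mono) (auto intro: sum_nonneg less_imp_le p_pos)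
    ultimately show ?thesis unfolding f_def by simp
  qed
  show ?thesis unfolding inv_def using pos axl fx epos by force
qed

lemma ln_bound: "\<mu> * ln (3 * real n / \<mu>) \<le> 2 * eps"
proof -
  have L: "3 \<le> Lg" by (rule Lg_ge3)
  have e1: "3 * real n / \<mu> = 12 * (Lg * (real n / eps))" unfolding mu_eq using L epos by (simp add: field_simps)
  have pa: "0 < Lg" "0 < real n / eps" using L npos epos by auto
  have pb: "0 < Lg * (real n / eps)" using pa by (rule mult_pos_pos)
  have "ln (3 * real n / \<mu>) = ln 12 + ln (Lg * (real n / eps))"
    unfolding e1 using pb by (intro ln_mult_pos) simp_all
  also have "ln (Lg * (real n / eps)) = ln Lg + ln (real n / eps)" using pa by (intro ln_mult_pos) auto
  finally have "ln (3 * real n / \<mu>) = ln 12 + (ln Lg + ln (real n / eps))" .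
  also have "\<dots> \<le> 11 + (Lg + Lg)"
  proof -
    have "ln (12::real) \<le> 12 - 1" by (rule ln_le_minus_one) simp
    moreover have "ln Lg \<le> Lg - 1" using L by (intro ln_le_minus_one) simp
    moreover have "ln (real n / eps) \<le> Lg" by (rule Lg_ge(2))
    ultimately show ?thesis by linarith
  qed
  finally have "\<mu> * ln (3 * real n / \<mu>) \<le> \<mu> * (11 + 2 * Lg)" using mu_pos by (intro mult_left_mono) auto
  also have "\<dots> = eps * (11 + 2 * Lg) / (4 * Lg)" using mu_eq by simp
  also have "\<dots> \<le> 2 * eps" using L epos by (simp add: divide_le_eq)
  finally show ?thesis .
qed

lemma inv_step:
  assumes "inv x"
  shows "inv (alg1_step A m n eps t x)"
    "f (alg1_step A m n eps t x) \<le> f x - \<alpha> / 10 * (\<Sum>i<n. x i * (eta t x i * g x i))"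
proof -
  define x' where "x' = alg1_step A m n eps t x"
  have xpos: "\<And>i. i < n \<Longrightarrow> 0 < x i" and axl: "\<And>j. j < m \<Longrightarrow> ax x j \<le> 1 + 2 * eps"
    and fx: "f x \<le> eps" using assms unfolding inv_def by auto
  have ax2: "ax x j \<le> 2" if "j < m" for j using axl[OF that] esmall by simp
  show desc: "f (alg1_step A m n eps t x) \<le> f x - \<alpha> / 10 * (\<Sum>i<n. x i * (eta t x i * g x i))"
    by (rule descent[OF xpos ax2])
  have Snn: "0 \<le> (\<Sum>i<n. x i * (eta t x i * g x i))"
  proof (intro sum_nonneg)
    fix i assume "i \<in> {..<n}" then have i: "i < n" by simp
    show "0 \<le> x i * (eta t x i * g x i)" by (rule mult_nonneg_nonneg[OF less_imp_le[OF xpos[OF i]] eta_props(4)[OF i]])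
  qed
  have "0 \<le> \<alpha> / 10 * (\<Sum>i<n. x i * (eta t x i * g x i))"
    using alpha_pos Snn by (intro mult_nonneg_nonneg) auto
  then have fx': "f x' \<le> eps" using desc fx unfolding x'_def by linarith
  have x'pos: "0 < x' i" if "i < n" for i unfolding x'_def alg1_step_def using xpos[OF that] by simp
  have ea: "exp \<alpha> \<le> 1 + 2 * \<alpha>" using alpha_pos alpha_le esmall by (intro real_exp_bound_lemma) auto
  have x'le: "x' i \<le> exp \<alpha> * x i" if i: "i < n" for i
  proof -
    have "- eta t x i \<le> 1" using eta_props(1)[OF i, of t x] by linarith
    then have "\<alpha> * (- eta t x i) \<le> \<alpha> * 1" using alpha_pos by (intro mult_left_mono) auto
    then have "- \<alpha> * eta t x i \<le> \<alpha>" by simp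
    then show ?thesis unfolding x'_def alg1_step_def using xpos[OF i] by (simp add: mult.commute)
  qed
  have ax'2: "ax x' j \<le> 2" if j: "j < m" for j
  proof -
    have "ax x' j \<le> (\<Sum>i<n. A j i * (exp \<alpha> * x i))" unfolding Amul_def
      using x'le Anonneg[OF j] by (intro sum_mono mult_left_mono) auto
    also have "\<dots> = exp \<alpha> * ax x j" unfolding Amul_def by (simp add: sum_distrib_left mult_ac)
    also have "\<dots> \<le> (1 + 2 * \<alpha>) * (1 + 2 * eps)" using ea axl[OF j] ax_nonneg[of x j] xpos j alpha_pos
      by (intro mult_mono) (auto intro: less_imp_le)
    also have "\<dots> \<le> (1 + 1/3600) * (1 + 1/15)" using alpha_le alpha_pos esmall epos by (intro mult_mono) auto
    also have "\<dots> \<le> 2" by simp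
    finally show ?thesis .
  qed
  have x'le2: "x' i \<le> 2" if i: "i < n" for i
    using x_le_ax[of x' i] x'pos ax'2 i by (force intro: less_imp_le)
  have sx': "sx x' \<le> 2 * real n"
  proof -
    have "sx x' \<le> (\<Sum>i<n. 2)" unfolding sx_def using x'le2 by (intro sum_mono) auto
    then show ?thesis by simp
  qed
  have ax'le: "ax x' j \<le> 1 + 2 * eps" if j: "j < m" for j
  proof -
    have "p x' j \<le> (\<Sum>j<m. p x' j)" using j p_pos by (intro member_le_sum) (auto intro: less_imp_le)
    then have "\<mu> * p x' j \<le> \<mu> * (\<Sum>j<m. p x' j)" using mu_pos by (intro mult_left_mono) auto
    also have "\<dots> = f x' + sx x'" unfolding f_def by simp
    also have "\<dots> \<le> 3 * real n" using fx' sx' esmall npos by simp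
    finally have "p x' j \<le> 3 * real n / \<mu>" using mu_pos by (simp add: field_simps)
    then have "ln (p x' j) \<le> ln (3 * real n / \<mu>)" using p_pos mu_pos npos by (subst ln_le_cancel_iff) auto
    then have "(ax x' j - 1) / \<mu> \<le> ln (3 * real n / \<mu>)" unfolding pvec_def by simp
    then have "ax x' j - 1 \<le> \<mu> * ln (3 * real n / \<mu>)" using mu_pos by (simp add: divide_le_eq mult.commute)
    then show ?thesis using ln_bound by linarith
  qed
  show "inv (alg1_step A m n eps t x)" unfolding x'_def[symmetric] inv_def using x'pos ax'le fx' by auto
qed

lemma sx_step: assumes "inv x"
  shows "sx (alg1_step A m n eps t x) \<le> sx x - \<alpha> * (\<Sum>i<n. x i * eta t x i) + \<alpha>\<^sup>2 * (\<Sum>i<n. x i * (eta t x i)\<^sup>2)"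
proof -
  have xpos: "\<And>i. i < n \<Longrightarrow> 0 < x i" using assms unfolding inv_def by auto
  have "sx (alg1_step A m n eps t x) \<le> (\<Sum>i<n. x i + x i * (- \<alpha> * eta t x i + (- \<alpha> * eta t x i)\<^sup>2))"
    unfolding sx_def alg1_step_def
  proof (intro sum_mono)
    fix i assume "i \<in> {..<n}" then have i: "i < n" by simp
    have "\<bar>- \<alpha> * eta t x i\<bar> = \<alpha> * \<bar>eta t x i\<bar>" using alpha_pos by (simp add: abs_mult)
    also have "\<dots> \<le> \<alpha> * 1" using eta_props(1)[OF i, of t x] alpha_pos by (intro mult_left_mono) auto
    also have "\<dots> \<le> 1" using alpha_le esmall by simp
    finally have "\<bar>- \<alpha> * eta t x i\<bar> \<le> 1" .
    then have "exp (- \<alpha> * eta t x i) \<le> 1 + - \<alpha> * eta t x i + (- \<alpha> * eta t x i)\<^sup>2" by (rule exp_quad)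
    then have "x i * exp (- \<alpha> * eta t x i) \<le> x i * (1 + - \<alpha> * eta t x i + (- \<alpha> * eta t x i)\<^sup>2)"
      using xpos[OF i] by (intro mult_left_mono) auto
    then show "x i * exp (- \<alpha> * eta t x i) \<le> x i + x i * (- \<alpha> * eta t x i + (- \<alpha> * eta t x i)\<^sup>2)"
      by (simp add: algebra_simps)
  qed
  also have "\<dots> = sx x - \<alpha> * (\<Sum>i<n. x i * eta t x i) + \<alpha>\<^sup>2 * (\<Sum>i<n. x i * (eta t x i)\<^sup>2)"
  proof -
    have "(\<Sum>i<n. x i + x i * (- \<alpha> * eta t x i + (- \<alpha> * eta t x i)\<^sup>2)) =
        (\<Sum>i<n. x i + (- \<alpha>) * (x i * eta t x i) + \<alpha>\<^sup>2 * (x i * (eta t x i)\<^sup>2))"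
      by (intro sum.cong refl) (simp add: power2_eq_square algebra_simps)
    also have "\<dots> = (\<Sum>i<n. x i) + (- \<alpha>) * (\<Sum>i<n. x i * eta t x i) + \<alpha>\<^sup>2 * (\<Sum>i<n. x i * (eta t x i)\<^sup>2)"
      by (simp only: sum.distrib sum_distrib_left)
    finally show ?thesis unfolding sx_def by simp
  qed
  finally show ?thesis .
qed

end


context lpset begin

definition Feas :: "real set" where
  "Feas = {(\<Sum>i<n. z i) | z. (\<forall>i<n. 0 \<le> z i) \<and> (\<forall>j<m. (\<Sum>i<n. A j i * z i) \<le> 1)}"

lemma OPT_Feas: "OPT A m n = Sup Feas" unfolding OPT_def Feas_def ..

lemma feas_le_n: assumes "\<forall>i<n. 0 \<le> z i" "\<forall>j<m. (\<Sum>i<n. A j i * z i) \<le> 1"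
  shows "(\<Sum>i<n. z i) \<le> real n"
proof -
  have "z i \<le> 1" if i: "i < n" for i
  proof -
    obtain j where "j < m" "z i \<le> ax z j" using x_le_ax[of z i] assms i by auto
    then show ?thesis using assms unfolding Amul_def by force
  qed
  then have "(\<Sum>i<n. z i) \<le> (\<Sum>i<n. 1)" by (intro sum_mono) auto
  then show ?thesis by simp
qed

lemma Feas_bdd: "bdd_above Feas"
  unfolding Feas_def bdd_above_def using feas_le_n by blast

lemma feas_le_OPT: assumes "\<forall>i<n. 0 \<le> z i" "\<forall>j<m. (\<Sum>i<n. A j i * z i) \<le> 1"
  shows "(\<Sum>i<n. z i) \<le> OPT A m n"
  unfolding OPT_Feas by (rule cSup_upper[OF _ Feas_bdd]) (use assms in \<open>auto simp: Feas_def\<close>)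

lemma OPT_ge1: "1 \<le> OPT A m n"
proof -
  obtain i0 where i0: "i0 < n" "colnorm A m i0 = 1" using col_one by auto
  define z where "z i = (if i = i0 then 1 else (0::real))" for i
  have s1: "(\<Sum>i<n. z i) = 1" unfolding z_def using i0 by simp
  have s2: "(\<Sum>i<n. A j i * z i) = A j i0" for j unfolding z_def using i0
    by (simp add: if_distrib cong: if_cong)
  have "(\<Sum>i<n. z i) \<le> OPT A m n"
  proof (rule feas_le_OPT)
    show "\<forall>i<n. 0 \<le> z i" by (simp add: z_def)
    show "\<forall>j<m. (\<Sum>i<n. A j i * z i) \<le> 1"
      using s2 A_le_col[OF _ i0(1)] i0(2) by (metis (no_types, lifting))
  qed
  then show ?thesis using s1 by simp
qed

definition K where "K = (1 + 2 * eps) * OPT A m n"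

lemma K_ge: "1 \<le> K" "OPT A m n \<le> K"
  using OPT_ge1 epos unfolding K_def by (auto simp: algebra_simps) (smt (verit) mult_nonneg_nonneg)

lemma sx_le_K: assumes "inv x" shows "sx x \<le> K"
proof -
  have xpos: "\<And>i. i < n \<Longrightarrow> 0 < x i" and axl: "\<And>j. j < m \<Longrightarrow> ax x j \<le> 1 + 2 * eps"
    using assms unfolding inv_def by auto
  have c: "0 < 1 + 2 * eps" using epos by simp
  define z where "z i = x i / (1 + 2 * eps)" for i
  have "(\<Sum>i<n. z i) \<le> OPT A m n"
  proof (rule feas_le_OPT)
    show "\<forall>i<n. 0 \<le> z i" unfolding z_def using xpos c by (auto intro: divide_nonneg_pos less_imp_le)
    show "\<forall>j<m. (\<Sum>i<n. A j i * z i) \<le> 1"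
    proof (intro allI impI)
      fix j assume j: "j < m"
      have "(\<Sum>i<n. A j i * z i) = ax x j / (1 + 2 * eps)" unfolding z_def Amul_def
        by (simp add: sum_divide_distrib)
      also have "\<dots> \<le> 1" using axl[OF j] c by simp
      finally show "(\<Sum>i<n. A j i * z i) \<le> 1" .
    qed
  qed
  moreover have "(\<Sum>i<n. z i) = sx x / (1 + 2 * eps)" unfolding z_def sx_def by (simp add: sum_divide_distrib)
  ultimately show ?thesis unfolding K_def using c by (simp add: divide_le_eq mult.commute)
qed

lemma sx_nonneg: "inv x \<Longrightarrow> 0 \<le> sx x"
  unfolding inv_def sx_def by (auto intro: sum_nonneg less_imp_le)

abbreviation X where "X ts k \<equiv> alg1_iter A m n eps ts k"

lemma X_Suc: "X ts (Suc k) = alg1_step A m n eps (ts ! k) (X ts k)" by simp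

lemma inv_X: "inv (X ts k)"
  by (induction k) (auto simp: inv_x0 inv_step(1))

lemma X_prefix: "k \<le> length xs \<Longrightarrow> X (xs @ ys) k = X xs k"
  by (induction k) (auto simp: nth_append)

definition Seta where "Seta ts k = (\<Sum>i<n. X ts k i * (eta (ts ! k) (X ts k) i * g (X ts k) i))"
definition Veta where "Veta ts k = (\<Sum>i<n. X ts k i * eta (ts ! k) (X ts k) i)"

lemma f_tele: "f (X ts N) \<le> f (X ts 0) - \<alpha> / 10 * (\<Sum>k<N. Seta ts k)"
proof (induction N)
  case 0 then show ?case by simp
next
  case (Suc N)
  have "f (X ts (Suc N)) \<le> f (X ts N) - \<alpha> / 10 * Seta ts N"
    unfolding X_Suc Seta_def by (rule inv_step(2)[OF inv_X])
  then show ?case using Suc by (simp add: algebra_simps)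
qed

lemma f_lower: "inv x \<Longrightarrow> - K \<le> f x"
proof -
  assume a: "inv x"
  have "0 \<le> \<mu> * (\<Sum>j<m. p x j)" using mu_pos p_pos by (intro mult_nonneg_nonneg sum_nonneg) (auto intro: less_imp_le)
  then show ?thesis unfolding f_def using sx_le_K[OF a] by linarith
qed

lemma D1: "(\<Sum>k<N. Seta ts k) \<le> 10 / \<alpha> * (eps + K)"
proof -
  have "\<alpha> / 10 * (\<Sum>k<N. Seta ts k) \<le> eps + K"
    using f_tele[of ts N] f_lower[OF inv_X[of ts N]] inv_X[of ts 0] unfolding inv_def by linarith
  then show ?thesis using alpha_pos by (simp add: field_simps)
qed

lemma sx_x0: "sx (X ts 0) \<le> 1"
proof -
  have "sx (X ts 0) \<le> (\<Sum>i<n. 1 / real n)" unfolding sx_def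
  proof (intro sum_mono)
    fix i assume "i \<in> {..<n}" then have i: "i < n" by simp
    have "(1 - eps / 2) / (real n * colnorm A m i) \<le> 1 / (real n * 1)"
      using col_ge1[OF i] npos epos by (intro frac_le mult_left_mono) auto
    then show "X ts 0 i \<le> 1 / real n" by (simp add: x0_def)
  qed
  also have "\<dots> = 1" using npos by simp
  finally show ?thesis .
qed

lemma D2: "(\<Sum>k<N. Veta ts k) \<le> 1 / \<alpha> + \<alpha> * real N * K"
proof -
  have tele: "sx (X ts N) \<le> sx (X ts 0) - \<alpha> * (\<Sum>k<N. Veta ts k) + \<alpha>\<^sup>2 * (real N * K)" for N
  proof (induction N)
    case 0 then show ?case by simp
  next
    case (Suc N)
    have q: "(\<Sum>i<n. X ts N i * (eta (ts ! N) (X ts N) i)\<^sup>2) \<le> K"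
    proof -
      have "(\<Sum>i<n. X ts N i * (eta (ts ! N) (X ts N) i)\<^sup>2) \<le> (\<Sum>i<n. X ts N i * 1)"
      proof (intro sum_mono mult_left_mono)
        fix i assume "i \<in> {..<n}" then have i: "i < n" by simp
        have "\<bar>eta (ts ! N) (X ts N) i\<bar> \<le> 1" by (rule eta_props(1)[OF i])
        then show "(eta (ts ! N) (X ts N) i)\<^sup>2 \<le> 1" by (simp add: abs_le_square_iff[symmetric] abs_square_le_1)
        show "0 \<le> X ts N i" using inv_X[of ts N] i unfolding inv_def by (auto intro: less_imp_le)
      qed
      also have "\<dots> = sx (X ts N)" unfolding sx_def by simp
      also have "\<dots> \<le> K" by (rule sx_le_K[OF inv_X])
      finally show ?thesis .
    qed
    have "sx (X ts (Suc N)) \<le> sx (X ts N) - \<alpha> * Veta ts N + \<alpha>\<^sup>2 * (\<Sum>i<n. X ts N i * (eta (ts ! N) (X ts N) i)\<^sup>2)"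
      unfolding X_Suc Veta_def by (rule sx_step[OF inv_X])
    also have "\<dots> \<le> sx (X ts N) - \<alpha> * Veta ts N + \<alpha>\<^sup>2 * K"
      using q by (intro add_left_mono mult_left_mono) auto
    finally show ?case using Suc by (simp add: algebra_simps)
  qed
  have "\<alpha> * (\<Sum>k<N. Veta ts k) \<le> 1 + \<alpha>\<^sup>2 * (real N * K)"
    using tele[of N] sx_x0[of ts] sx_nonneg[OF inv_X[of ts N]] by linarith
  then show ?thesis using alpha_pos by (simp add: field_simps power2_eq_square)
qed

end


context lpset begin

lemma CS_eq: "choice_seqs m n eps = Ls w T"
  unfolding choice_seqs_def Ls_def by auto

definition Fadd :: "((nat \<Rightarrow> real) \<Rightarrow> nat \<Rightarrow> real) \<Rightarrow> nat list \<Rightarrow> real" where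
  "Fadd h pre = (\<Sum>k<length pre. h (X pre k) (pre ! k))"

lemma Fadd_snoc: "Fadd h (pre @ [t]) = Fadd h pre + h (X pre (length pre)) t"
proof -
  have "Fadd h (pre @ [t]) = (\<Sum>k<length pre. h (X (pre @ [t]) k) ((pre @ [t]) ! k)) +
        h (X (pre @ [t]) (length pre)) ((pre @ [t]) ! length pre)"
    unfolding Fadd_def by simp
  also have "(\<Sum>k<length pre. h (X (pre @ [t]) k) ((pre @ [t]) ! k)) = Fadd h pre"
    unfolding Fadd_def by (intro sum.cong refl) (simp add: X_prefix nth_append)
  also have "X (pre @ [t]) (length pre) = X pre (length pre)" by (simp add: X_prefix)
  finally show ?thesis by simp
qed

lemma xi_bucket_ok: "i < n \<Longrightarrow> xi x i = 0 \<or> eps < \<bar>xi x i\<bar>" "i < n \<Longrightarrow> \<bar>xi x i\<bar> \<le> 1"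
  using xi_props by auto

lemma sum_bucket_lin: fixes \<phi> :: "real \<Rightarrow> real" assumes "i < n" "\<phi> 0 = 0" shows "(\<Sum>t<w. \<phi> (eta t x i)) = \<phi> (xi x i)"
  by (rule bucket_sum_lin) (use xi_bucket_ok[OF assms(1), of x] w_cover assms(2) in auto)

definition Sx where "Sx x = (\<Sum>i<n. x i * (xi x i * g x i))"
definition V where "V x = (\<Sum>i<n. x i * xi x i)"

definition h1 where "h1 x t = Sx x - real w * (\<Sum>i<n. x i * (eta t x i * g x i))"

lemma sum_h1: "(\<Sum>t<w. h1 x t) = 0"
proof -
  have "(\<Sum>t<w. \<Sum>i<n. x i * (eta t x i * g x i)) = (\<Sum>i<n. \<Sum>t<w. x i * (eta t x i * g x i))"
    by (rule sum.swap)
  also have "\<dots> = (\<Sum>i<n. x i * (xi x i * g x i))"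
    by (intro sum.cong refl) (rule sum_bucket_lin[of _ "\<lambda>b. x _ * (b * g x _)", simplified], simp)
  finally have e: "(\<Sum>t<w. \<Sum>i<n. x i * (eta t x i * g x i)) = Sx x" unfolding Sx_def .
  show ?thesis unfolding h1_def by (simp add: sum_subtractf sum_distrib_left[symmetric] e)
qed

lemma Sx_nonneg: assumes "inv x" shows "0 \<le> Sx x"
  unfolding Sx_def
proof (intro sum_nonneg)
  fix i assume "i \<in> {..<n}" then have i: "i < n" by simp
  have "0 < x i" using assms i unfolding inv_def by auto
  then show "0 \<le> x i * (xi x i * g x i)" by (rule mult_nonneg_nonneg[OF less_imp_le xi_props(7)[OF i]])
qed

lemma Fadd_h1: "length ts = T \<Longrightarrow> Fadd h1 ts = (\<Sum>k<T. Sx (X ts k)) - real w * (\<Sum>k<T. Seta ts k)"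
  unfolding Fadd_def h1_def Seta_def by (simp add: sum_subtractf sum_distrib_left)

lemma E1: "(\<Sum>ts\<in>Ls w T. \<Sum>k<T. Sx (X ts k)) \<le> real (w ^ T) * (real w * (10 / \<alpha> * (eps + K)))"
proof -
  have "(\<Sum>ts\<in>Ls w T. Fadd h1 ts) \<le> real w ^ T * Fadd h1 []"
  proof (rule supermart)
    fix k pre assume "k < T" "pre \<in> Ls w k"
    have "(\<Sum>t<w. Fadd h1 (pre @ [t])) = (\<Sum>t<w. Fadd h1 pre + h1 (X pre (length pre)) t)"
      by (simp add: Fadd_snoc)
    also have "\<dots> = real w * Fadd h1 pre" by (simp add: sum.distrib sum_h1)
    finally show "(\<Sum>t<w. Fadd h1 (pre @ [t])) \<le> real w * Fadd h1 pre" by simp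
  qed
  also have "Fadd h1 [] = 0" unfolding Fadd_def by simp
  finally have a: "(\<Sum>ts\<in>Ls w T. Fadd h1 ts) \<le> 0" by simp
  have b: "(\<Sum>ts\<in>Ls w T. Fadd h1 ts) = (\<Sum>ts\<in>Ls w T. \<Sum>k<T. Sx (X ts k)) - real w * (\<Sum>ts\<in>Ls w T. \<Sum>k<T. Seta ts k)"
    by (simp add: Fadd_h1 Ls_def sum_subtractf sum_distrib_left)
  have c: "(\<Sum>ts\<in>Ls w T. \<Sum>k<T. Seta ts k) \<le> (\<Sum>ts\<in>Ls w T. 10 / \<alpha> * (eps + K))"
    using D1 by (intro sum_mono) auto
  have "(\<Sum>ts\<in>Ls w T. \<Sum>k<T. Sx (X ts k)) \<le> real w * (\<Sum>ts\<in>Ls w T. \<Sum>k<T. Seta ts k)" using a b by linarith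
  also have "\<dots> \<le> real w * (\<Sum>ts\<in>Ls w T. 10 / \<alpha> * (eps + K))" using c by (intro mult_left_mono) auto
  also have "\<dots> = real (w ^ T) * (real w * (10 / \<alpha> * (eps + K)))" by (simp add: Ls_card)
  finally show ?thesis .
qed

definition B1 where "B1 = {ts \<in> Ls w T. 20 * (real w * (10 / \<alpha> * (eps + K))) \<le> (\<Sum>k<T. Sx (X ts k))}"

lemma B1_card: "real (card B1) \<le> real (w ^ T) / 20"
proof -
  have pos: "0 < real w * (10 / \<alpha> * (eps + K))" using w_ge5 alpha_pos epos K_ge by simp
  have "real (card B1) * (20 * (real w * (10 / \<alpha> * (eps + K)))) \<le> (\<Sum>ts\<in>Ls w T. \<Sum>k<T. Sx (X ts k))"
    by (rule markov_count[OF Ls_finite]) (auto simp: B1_def intro!: sum_nonneg Sx_nonneg inv_X)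
  also have "\<dots> \<le> real (w ^ T) * (real w * (10 / \<alpha> * (eps + K)))" by (rule E1)
  finally have "real (card B1) * (20 * (real w * (10 / \<alpha> * (eps + K)))) \<le> real (w ^ T) * (real w * (10 / \<alpha> * (eps + K)))" .
  then have "(real (card B1) * 20) * (real w * (10 / \<alpha> * (eps + K))) \<le> real (w ^ T) * (real w * (10 / \<alpha> * (eps + K)))"
    by (simp only: mult.assoc)
  then have "real (card B1) * 20 \<le> real (w ^ T)" by (rule mult_right_le_imp_le[OF _ pos])
  then show ?thesis by simp
qed

end


context lpset begin

definition h2 where "h2 x t = V x - real w * (\<Sum>i<n. x i * eta t x i)"
definition R where "R = (1 + real w) * K"

lemma sum_h2: "(\<Sum>t<w. h2 x t) = 0"
proof -
  have "(\<Sum>t<w. \<Sum>i<n. x i * eta t x i) = (\<Sum>i<n. \<Sum>t<w. x i * eta t x i)" by (rule sum.swap)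
  also have "\<dots> = (\<Sum>i<n. x i * xi x i)"
    by (intro sum.cong refl) (rule sum_bucket_lin[of _ "\<lambda>b. x _ * b", simplified], simp)
  finally have e: "(\<Sum>t<w. \<Sum>i<n. x i * eta t x i) = V x" unfolding V_def .
  show ?thesis unfolding h2_def by (simp add: sum_subtractf sum_distrib_left[symmetric] e)
qed

lemma abs_wsum: assumes "inv x" "\<And>i. i < n \<Longrightarrow> \<bar>c i\<bar> \<le> 1"
  shows "\<bar>\<Sum>i<n. x i * c i\<bar> \<le> K"
proof -
  have "\<bar>\<Sum>i<n. x i * c i\<bar> \<le> (\<Sum>i<n. \<bar>x i * c i\<bar>)" by (rule sum_abs)
  also have "\<dots> \<le> (\<Sum>i<n. x i)"
  proof (intro sum_mono)
    fix i assume "i \<in> {..<n}" then have i: "i < n" by simp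
    have xp: "0 < x i" using assms(1) i unfolding inv_def by auto
    have "\<bar>x i * c i\<bar> = x i * \<bar>c i\<bar>" using xp by (simp add: abs_mult)
    also have "\<dots> \<le> x i" by (rule mult_left_le) (use assms(2)[OF i] xp in auto)
    finally show "\<bar>x i * c i\<bar> \<le> x i" .
  qed
  also have "\<dots> \<le> K" using sx_le_K[OF assms(1)] unfolding sx_def .
  finally show ?thesis .
qed

lemma h2_abs: assumes "inv x" shows "\<bar>h2 x t\<bar> \<le> R"
proof -
  have a: "\<bar>V x\<bar> \<le> K" unfolding V_def by (rule abs_wsum[OF assms]) (rule xi_props(1))
  have b: "\<bar>\<Sum>i<n. x i * eta t x i\<bar> \<le> K" by (rule abs_wsum[OF assms]) (rule eta_props(1))
  have "\<bar>real w * (\<Sum>i<n. x i * eta t x i)\<bar> \<le> real w * K" using b by (simp add: abs_mult mult_left_mono)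
  then have "\<bar>h2 x t\<bar> \<le> K + real w * K" unfolding h2_def using a by linarith
  then show ?thesis unfolding R_def by (simp add: algebra_simps)
qed

lemma R_pos: "0 < R" unfolding R_def using K_ge by simp

lemma exp_sum_h2: assumes "inv x" "0 \<le> s" "s * R \<le> 1"
  shows "(\<Sum>t<w. exp (s * h2 x t)) \<le> real w * exp ((s * R)\<^sup>2)"
proof -
  have each: "exp (s * h2 x t) \<le> 1 + s * h2 x t + (s * R)\<^sup>2" for t
  proof -
    have ab: "\<bar>s * h2 x t\<bar> \<le> s * R" using h2_abs[OF assms(1), of t] assms(2)
      by (simp add: abs_mult mult_left_mono)
    then have "\<bar>s * h2 x t\<bar> \<le> 1" using assms(3) by linarith
    then have "exp (s * h2 x t) \<le> 1 + s * h2 x t + (s * h2 x t)\<^sup>2" by (rule exp_quad)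
    moreover have "(s * h2 x t)\<^sup>2 \<le> (s * R)\<^sup>2"
      using ab by (metis abs_le_square_iff abs_of_nonneg abs_ge_zero order_trans power2_abs)
    ultimately show ?thesis by linarith
  qed
  have "(\<Sum>t<w. exp (s * h2 x t)) \<le> (\<Sum>t<w. 1 + s * h2 x t + (s * R)\<^sup>2)" using each by (intro sum_mono) auto
  also have "\<dots> = real w * (1 + (s * R)\<^sup>2)"
    by (simp add: sum.distrib sum_distrib_left[symmetric] sum_h2 algebra_simps)
  also have "\<dots> \<le> real w * exp ((s * R)\<^sup>2)" by (intro mult_left_mono) auto
  finally show ?thesis .
qed

definition s2 where "s2 = 5 * eps / (2 * (1 + real w) * R)"
definition F2 where "F2 pre = exp (s2 * Fadd h2 pre - real (length pre) * (s2 * R)\<^sup>2)"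

lemma s2R: "s2 * R = 5 * eps / (2 * (1 + real w))" unfolding s2_def using R_pos by simp

lemma s2_ok: "0 \<le> s2" "s2 * R \<le> 1"
proof -
  show "0 \<le> s2" unfolding s2_def using R_pos epos by simp
  have "5 * eps / (2 * (1 + real w)) \<le> 5 * eps / 2" using epos by (intro divide_left_mono) auto
  also have "\<dots> \<le> 1" using esmall by simp
  finally show "s2 * R \<le> 1" unfolding s2R .
qed

lemma E2: "(\<Sum>ts\<in>Ls w T. F2 ts) \<le> real (w ^ T)"
proof -
  have "(\<Sum>ts\<in>Ls w T. F2 ts) \<le> real w ^ T * F2 []"
  proof (rule supermart)
    fix k pre assume "k < T" "pre \<in> Ls w k"
    define x where "x = X pre (length pre)"
    define c where "c = s2 * Fadd h2 pre - real (length pre) * (s2 * R)\<^sup>2"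
    have e: "F2 (pre @ [t]) = exp c * exp (- (s2 * R)\<^sup>2) * exp (s2 * h2 x t)" for t
      unfolding F2_def Fadd_snoc c_def x_def by (simp add: exp_add[symmetric] algebra_simps)
    have "(\<Sum>t<w. F2 (pre @ [t])) = exp c * exp (- (s2 * R)\<^sup>2) * (\<Sum>t<w. exp (s2 * h2 x t))"
      unfolding e by (simp add: sum_distrib_left)
    also have "\<dots> \<le> exp c * exp (- (s2 * R)\<^sup>2) * (real w * exp ((s2 * R)\<^sup>2))"
      by (intro mult_left_mono exp_sum_h2 s2_ok) (auto simp: x_def inv_X)
    also have "\<dots> = real w * exp c" by (simp add: exp_minus field_simps)
    also have "exp c = F2 pre" unfolding F2_def c_def ..
    finally show "(\<Sum>t<w. F2 (pre @ [t])) \<le> real w * F2 pre" .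
  qed
  also have "F2 [] = 1" unfolding F2_def Fadd_def by simp
  finally show ?thesis by simp
qed

definition B2 where "B2 = {ts \<in> Ls w T. 5 * eps * real T * K \<le> Fadd h2 ts}"

lemma exp14: "1000 \<le> exp (14::real)"
proof -
  have "3 \<le> exp (2::real)" using exp_ge_add_one_self[of "2::real"] by simp
  then have "3 ^ 7 \<le> exp (2::real) ^ 7" by (intro power_mono) auto
  also have "exp (2::real) ^ 7 = exp 14" using exp_of_nat_mult[of 7 "2::real"] by simp
  finally show ?thesis by simp
qed

lemma B2_bound: "ts \<in> B2 \<Longrightarrow> 1000 \<le> F2 ts"
proof -
  assume ts: "ts \<in> B2"
  then have len: "length ts = T" and a: "5 * eps * real T * K \<le> Fadd h2 ts" by (auto simp: B2_def Ls_def)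
  have w5: "5 \<le> real w" using w_ge5 by simp
  have lnn: "3 \<le> ln (real n / eps)" using ln_inv_eps_ge3 npos epos
  proof -
    have "ln (1 / eps) \<le> ln (real n / eps)" using npos epos by (subst ln_le_cancel_iff) (auto simp: divide_right_mono)
    then show ?thesis using ln_inv_eps_ge3 by linarith
  qed
  have Tge: "6 * (real w)\<^sup>2 \<le> eps\<^sup>2 * real T"
  proof -
    have "2 * (real w)\<^sup>2 * 3 \<le> 2 * (real w)\<^sup>2 * ln (real n / eps)" using lnn by (intro mult_left_mono) auto
    also have "\<dots> \<le> real T * eps\<^sup>2" using T_ge(2) epos by (simp add: divide_le_eq)
    finally show ?thesis by (simp add: mult_ac)
  qed
  have key: "14 \<le> s2 * (5 * eps * real T * K) - real T * (s2 * R)\<^sup>2"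
  proof -
    have r: "5 * eps * real T * K = R * (5 * eps * real T / (1 + real w))" unfolding R_def using w5 by (simp add: field_simps)
    have "s2 * (5 * eps * real T * K) = (s2 * R) * (5 * eps * real T / (1 + real w))" unfolding r by (simp only: mult.assoc)
    also have "\<dots> = 25 * (eps\<^sup>2 * real T) / (2 * (1 + real w)\<^sup>2)"
      unfolding s2R using w5 by (simp add: field_simps power2_eq_square)
    finally have "s2 * (5 * eps * real T * K) = 25 * (eps\<^sup>2 * real T) / (2 * (1 + real w)\<^sup>2)" .
    moreover have "real T * (s2 * R)\<^sup>2 = 25 * (eps\<^sup>2 * real T) / (4 * (1 + real w)\<^sup>2)"
      unfolding s2R using w5 by (simp add: field_simps power2_eq_square)
    moreover have "D / (2 * Q) - D / (4 * Q) = D / (4 * Q)" for D Q :: real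
      by (cases "Q = 0") (simp_all add: field_simps)
    ultimately have "s2 * (5 * eps * real T * K) - real T * (s2 * R)\<^sup>2 = 25 * (eps\<^sup>2 * real T) / (4 * (1 + real w)\<^sup>2)"
      by simp
    moreover have "14 \<le> 25 * (eps\<^sup>2 * real T) / (4 * (1 + real w)\<^sup>2)"
    proof -
      have "56 * (1 + real w)\<^sup>2 \<le> 150 * (real w)\<^sup>2"
      proof -
        have "1 + real w \<le> 6/5 * real w" using w5 by simp
        then have "(1 + real w)\<^sup>2 \<le> (6/5 * real w)\<^sup>2" by (rule power_mono) simp
        also have "\<dots> = 36/25 * (real w)\<^sup>2" by (simp add: power_mult_distrib power2_eq_square)
        finally have "(1 + real w)\<^sup>2 \<le> 36/25 * (real w)\<^sup>2" .
        moreover have "0 \<le> (real w)\<^sup>2" by simp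
        ultimately show ?thesis by linarith
      qed
      also have "\<dots> \<le> 25 * (eps\<^sup>2 * real T)" using Tge by (simp add: mult.commute)
      finally show ?thesis using w5 by (simp add: field_simps)
    qed
    ultimately show ?thesis by simp
  qed
  have "14 \<le> s2 * Fadd h2 ts - real (length ts) * (s2 * R)\<^sup>2"
    using key a s2_ok(1) len by (smt (verit) mult_left_mono)
  then have "exp 14 \<le> F2 ts" unfolding F2_def by simp
  then show ?thesis using exp14 by linarith
qed

lemma B2_card: "real (card B2) \<le> real (w ^ T) / 1000"
proof -
  have "real (card B2) * 1000 \<le> (\<Sum>ts\<in>Ls w T. F2 ts)"
  proof (rule markov_count[OF Ls_finite])
    fix x assume "x \<in> Ls w T" show "0 \<le> F2 x" unfolding F2_def by simp
  next
    show "B2 \<subseteq> Ls w T" unfolding B2_def by auto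
  next
    fix x assume "x \<in> B2" then show "1000 \<le> F2 x" by (rule B2_bound)
  qed
  also have "\<dots> \<le> real (w ^ T)" by (rule E2)
  finally show ?thesis by simp
qed

end


context lpset begin

definition h3 where "h3 i x t = exp (\<alpha> * xi x i) - 1"
definition F3 where "F3 i pre = (1 / X pre (length pre) i) * exp (- Fadd (h3 i) pre / real w)"

lemma X_snoc: "X (pre @ [t]) (Suc (length pre)) i = X pre (length pre) i * exp (- \<alpha> * eta t (X pre (length pre)) i)"
proof -
  have e: "X (pre @ [t]) (length pre) = X pre (length pre)" by (rule X_prefix) simp
  have h: "X (pre @ [t]) (Suc (length pre)) = alg1_step A m n eps t (X pre (length pre))"
    apply (subst X_Suc) apply (subst e) apply simp done
  show ?thesis unfolding h alg1_step_def by simp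
qed

lemma Xpos: "i < n \<Longrightarrow> 0 < X ts k i" using inv_X[of ts k] unfolding inv_def by auto

lemma E3: assumes i: "i < n" shows "(\<Sum>ts\<in>Ls w T. F3 i ts) \<le> real (w ^ T) * F3 i []"
proof -
  have "(\<Sum>ts\<in>Ls w T. F3 i ts) \<le> real w ^ T * F3 i []"
  proof (rule supermart)
    fix k pre assume "k < T" "pre \<in> Ls w k"
    define x where "x = X pre (length pre)"
    define q where "q = exp (\<alpha> * xi x i) - 1"
    define E where "E = exp (- Fadd (h3 i) pre / real w)"
    have xp: "0 < x i" unfolding x_def by (rule Xpos[OF i])
    have wp: "0 < real w" using w_ge5 by simp
    have F3p: "F3 i pre = (1 / x i) * E" unfolding F3_def x_def E_def ..
    have e: "F3 i (pre @ [t]) = F3 i pre * exp (- q / real w) * exp (\<alpha> * eta t x i)" for t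
    proof -
      have "F3 i (pre @ [t]) = (1 / (x i * exp (- \<alpha> * eta t x i))) * exp (- (Fadd (h3 i) pre + q) / real w)"
        unfolding F3_def length_append_singleton X_snoc Fadd_snoc by (simp add: x_def q_def h3_def)
      also have "1 / (x i * exp (- \<alpha> * eta t x i)) = (1 / x i) * exp (\<alpha> * eta t x i)"
        by (simp add: exp_minus field_simps)
      also have "exp (- (Fadd (h3 i) pre + q) / real w) = E * exp (- q / real w)"
      proof -
        have "- (Fadd (h3 i) pre + q) / real w = - Fadd (h3 i) pre / real w + - q / real w"
          using wp by (simp add: field_simps)
        then have "exp (- (Fadd (h3 i) pre + q) / real w) = exp (- Fadd (h3 i) pre / real w + - q / real w)"
          by (rule arg_cong)
        also have "\<dots> = exp (- Fadd (h3 i) pre / real w) * exp (- q / real w)" by (rule exp_add)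
        finally show ?thesis unfolding E_def .
      qed
      finally show ?thesis unfolding F3p by (simp only: mult_ac)
    qed
    have "(\<Sum>t<w. F3 i (pre @ [t])) = F3 i pre * exp (- q / real w) * (\<Sum>t<w. exp (\<alpha> * eta t x i))"
      unfolding e by (simp add: sum_distrib_left)
    also have "(\<Sum>t<w. exp (\<alpha> * eta t x i)) = real w + q"
      unfolding q_def by (rule bucket_sum_exp[OF xi_bucket_ok(1)[OF i, of x] xi_bucket_ok(2)[OF i, of x] w_cover])
    also have "real w + q \<le> real w * exp (q / real w)"
    proof -
      have "1 + q / real w \<le> exp (q / real w)" by (rule exp_ge_add_one_self)
      then have "real w * (1 + q / real w) \<le> real w * exp (q / real w)" using wp by (intro mult_left_mono) auto
      then show ?thesis using wp by (simp add: algebra_simps)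
    qed
    have "F3 i pre * exp (- q / real w) * (real w + q) \<le> F3 i pre * exp (- q / real w) * (real w * exp (q / real w))"
      using \<open>real w + q \<le> _\<close> xp unfolding F3p E_def by (intro mult_left_mono) auto
    also have "\<dots> = real w * F3 i pre * (exp (- q / real w) * exp (q / real w))" by (simp only: mult_ac)
    also have "exp (- q / real w) * exp (q / real w) = 1" by (simp add: exp_add[symmetric])
    also have "real w * F3 i pre * 1 = real w * F3 i pre" by simp
    finally show "(\<Sum>t<w. F3 i (pre @ [t])) \<le> real w * F3 i pre"
      using \<open>(\<Sum>t<w. F3 i (pre @ [t])) = _\<close> \<open>(\<Sum>t<w. exp (\<alpha> * eta t x i)) = real w + q\<close> by simp
  qed
  then show ?thesis by simp
qed

definition B3 where "B3 i = {ts \<in> Ls w T. lam A m eps (ybar A m n eps ts) i \<le> -2 * eps}"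

lemma lam_ybar: assumes i: "i < n"
  shows "lam A m eps (ybar A m n eps ts) i = (\<Sum>k<T. g (X ts k) i) / real T + eps"
proof -
  have Tp: "0 < real T" using T_pos by simp
  have "(\<Sum>j<m. A j i * ybar A m n eps ts j) = (\<Sum>j<m. \<Sum>k<T. A j i * p (X ts k) j) / real T"
    unfolding ybar_def by (simp add: sum_divide_distrib sum_distrib_left)
  also have "\<dots> = (\<Sum>k<T. \<Sum>j<m. A j i * p (X ts k) j) / real T" by (subst sum.swap) (rule refl)
  also have "\<dots> = (\<Sum>k<T. g (X ts k) i + 1) / real T" by (simp add: g_plus1)
  also have "\<dots> = (\<Sum>k<T. g (X ts k) i) / real T + 1" using Tp by (simp add: sum.distrib add_divide_distrib)
  finally show ?thesis unfolding lam_def by simp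
qed

lemma B3_bound: assumes i: "i < n" and ts: "ts \<in> B3 i"
  shows "colnorm A m i / 2 * (2 * real n) ^ 11 \<le> F3 i ts"
proof -
  have len: "length ts = T" and lm: "lam A m eps (ybar A m n eps ts) i \<le> -2 * eps"
    using ts by (auto simp: B3_def Ls_def)
  have Tp: "0 < real T" using T_pos by simp
  have sg: "(\<Sum>k<T. g (X ts k) i) \<le> -3 * eps * real T"
  proof -
    have "(\<Sum>k<T. g (X ts k) i) / real T \<le> -3 * eps" using lm lam_ybar[OF i, of ts] by simp
    then show ?thesis using Tp by (simp add: divide_le_eq)
  qed
  have sxi: "(\<Sum>k<T. xi (X ts k) i) \<le> -2 * eps * real T"
  proof -
    have "(\<Sum>k<T. xi (X ts k) i) \<le> (\<Sum>k<T. g (X ts k) i + eps)" by (intro sum_mono xi_props(3)[OF i])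
    also have "\<dots> = (\<Sum>k<T. g (X ts k) i) + eps * real T" by (simp add: sum.distrib)
    finally show ?thesis using sg by simp
  qed
  have al: "0 < \<alpha>" "\<alpha> \<le> eps / 240" using alpha_pos alpha_le by auto
  have fa: "Fadd (h3 i) ts \<le> \<alpha> * (\<Sum>k<T. xi (X ts k) i) + \<alpha>\<^sup>2 * real T"
  proof -
    have "Fadd (h3 i) ts = (\<Sum>k<T. exp (\<alpha> * xi (X ts k) i) - 1)" unfolding Fadd_def h3_def len ..
    also have "\<dots> \<le> (\<Sum>k<T. \<alpha> * xi (X ts k) i + \<alpha>\<^sup>2)"
    proof (intro sum_mono)
      fix k
      have xa: "\<bar>xi (X ts k) i\<bar> \<le> 1" by (rule xi_props(1)[OF i])
      have ab: "\<bar>\<alpha> * xi (X ts k) i\<bar> \<le> \<alpha>" using xa al by (simp add: abs_mult mult_left_le)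
      then have "\<bar>\<alpha> * xi (X ts k) i\<bar> \<le> 1" using al esmall by linarith
      then have "exp (\<alpha> * xi (X ts k) i) \<le> 1 + \<alpha> * xi (X ts k) i + (\<alpha> * xi (X ts k) i)\<^sup>2" by (rule exp_quad)
      moreover have "(\<alpha> * xi (X ts k) i)\<^sup>2 \<le> \<alpha>\<^sup>2"
        using ab by (metis abs_le_square_iff abs_of_nonneg al(1) less_imp_le power2_abs)
      ultimately show "exp (\<alpha> * xi (X ts k) i) - 1 \<le> \<alpha> * xi (X ts k) i + \<alpha>\<^sup>2" by linarith
    qed
    also have "\<dots> = \<alpha> * (\<Sum>k<T. xi (X ts k) i) + \<alpha>\<^sup>2 * real T" by (simp add: sum.distrib sum_distrib_left)
    finally show ?thesis .
  qed
  have wp: "0 < real w" using w_ge5 by simp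
  have aTw: "6 * ln (2 * real n) / eps \<le> \<alpha> * real T / real w"
  proof -
    have "6 * real w * ln (2 * real n) \<le> real T * (\<alpha> * eps)" using T_ge(1) al epos by (simp add: divide_le_eq)
    then show ?thesis using wp epos by (simp add: field_simps)
  qed
  have expo: "11 * ln (2 * real n) \<le> - Fadd (h3 i) ts / real w"
  proof -
    have "\<alpha> * real T * (2 * eps - \<alpha>) \<le> - Fadd (h3 i) ts"
    proof -
      have "\<alpha> * (\<Sum>k<T. xi (X ts k) i) \<le> \<alpha> * (-2 * eps * real T)" using sxi al by (intro mult_left_mono) auto
      then show ?thesis using fa by (simp add: power2_eq_square algebra_simps)
    qed
    then have "\<alpha> * real T * (2 * eps - \<alpha>) / real w \<le> - Fadd (h3 i) ts / real w" using wp by (intro divide_right_mono) auto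
    then have a1: "\<alpha> * real T / real w * (2 * eps - \<alpha>) \<le> - Fadd (h3 i) ts / real w" by simp
    have "11 * ln (2 * real n) \<le> 6 * ln (2 * real n) / eps * (2 * eps - \<alpha>)"
    proof -
      have "6 * ln (2 * real n) / eps * (2 * eps - \<alpha>) = 6 * ln (2 * real n) * (2 - \<alpha> / eps)" using epos by (simp add: field_simps)
      moreover have "\<alpha> / eps \<le> 1/240" using al epos by (simp add: divide_le_eq)
      moreover have "0 \<le> ln (2 * real n)" using ln2n by linarith
      ultimately show ?thesis
      proof -
        assume h1: "6 * ln (2 * real n) / eps * (2 * eps - \<alpha>) = 6 * ln (2 * real n) * (2 - \<alpha> / eps)"
          and h2: "\<alpha> / eps \<le> 1/240" and h3: "0 \<le> ln (2 * real n)"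
        have "6 * (\<alpha> / eps) \<le> 6 * (1/240)" using h2 by (rule mult_left_mono) simp
        then have "11 \<le> 6 * (2 - \<alpha> / eps)" by (simp add: right_diff_distrib)
        then have "11 * ln (2 * real n) \<le> 6 * (2 - \<alpha> / eps) * ln (2 * real n)" using h3 by (rule mult_right_mono)
        then show ?thesis unfolding h1 by (simp only: mult.commute mult.left_commute mult.assoc)
      qed
    qed
    also have "\<dots> \<le> \<alpha> * real T / real w * (2 * eps - \<alpha>)" using aTw al by (intro mult_right_mono) auto
    finally show ?thesis using a1 by linarith
  qed
  have y: "0 < 2 * real n" using npos by simp
  have "exp (real 11 * ln (2 * real n)) = exp (ln (2 * real n)) ^ 11" by (rule exp_of_nat_mult)
  then have "exp (11 * ln (2 * real n)) = (2 * real n) ^ 11" by (simp only: exp_ln[OF y] of_nat_numeral)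
  then have E: "(2 * real n) ^ 11 \<le> exp (- Fadd (h3 i) ts / real w)" using expo by (metis exp_le_cancel_iff)
  have Xle: "X ts T i \<le> 2 / colnorm A m i"
  proof -
    obtain j where j: "j < m" "A j i = colnorm A m i" using colnorm_attain[OF i] by auto
    have nn: "0 \<le> A j l * X ts T l" if "l \<in> {..<n}" for l
      using Xpos[of l ts T] Anonneg[OF j(1), of l] that by (intro mult_nonneg_nonneg) auto
    have "A j i * X ts T i \<le> ax (X ts T) j" unfolding Amul_def
      using nn i by (intro member_le_sum[of i "{..<n}" "\<lambda>i. A j i * X ts T i"]) auto
    also have "\<dots> \<le> 1 + 2 * eps" using inv_X[of ts T] j unfolding inv_def by auto
    also have "\<dots> \<le> 2" using esmall by simp
    finally show ?thesis using j col_ge1[OF i] by (simp add: field_simps)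
  qed
  have c1: "1 \<le> colnorm A m i" by (rule col_ge1[OF i])
  have inv1: "colnorm A m i / 2 \<le> 1 / X ts T i" using Xle Xpos[OF i] c1
    by (simp add: field_simps)
  have "colnorm A m i / 2 * (2 * real n) ^ 11 \<le> 1 / X ts T i * exp (- Fadd (h3 i) ts / real w)"
    using inv1 E c1 Xpos[OF i, of ts T] by (intro mult_mono) auto
  then show ?thesis unfolding F3_def len .
qed

lemma B3_card: assumes i: "i < n" shows "real (card (B3 i)) \<le> real (w ^ T) * (4 * real n / (2 * real n) ^ 11)"
proof -
  define Y where "Y = (2 * real n) ^ 11"
  define c where "c = colnorm A m i"
  have c1: "1 \<le> c" unfolding c_def by (rule col_ge1[OF i])
  have Yp: "0 < Y" unfolding Y_def using npos by simp
  have pos: "0 < c / 2 * Y" using c1 Yp by simp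
  have "real (card (B3 i)) * (c / 2 * Y) \<le> (\<Sum>ts\<in>Ls w T. F3 i ts)"
  proof (rule markov_count[OF Ls_finite])
    fix x assume "x \<in> Ls w T" show "0 \<le> F3 i x" unfolding F3_def using Xpos[OF i] by (auto intro: less_imp_le)
  next
    show "B3 i \<subseteq> Ls w T" unfolding B3_def by auto
  next
    fix x assume "x \<in> B3 i" then show "c / 2 * Y \<le> F3 i x" unfolding c_def Y_def by (rule B3_bound[OF i])
  qed
  also have "\<dots> \<le> real (w ^ T) * F3 i []" by (rule E3[OF i])
  also have "F3 i [] = real n * c / (1 - eps / 2)" unfolding F3_def Fadd_def c_def
    using esmall by (simp add: x0_def)
  also have "real n * c / (1 - eps / 2) \<le> 2 * real n * c"
    using esmall npos c1 by (simp add: field_simps)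
  finally have a: "real (card (B3 i)) * (c / 2 * Y) \<le> real (w ^ T) * (2 * real n * c)"
    by (simp add: mult_left_mono)
  have b: "real (w ^ T) * (2 * real n * c) = (real (w ^ T) * (4 * real n / Y)) * (c / 2 * Y)"
    using Yp by (simp add: field_simps)
  have "real (card (B3 i)) \<le> real (w ^ T) * (4 * real n / Y)"
    using a unfolding b by (rule mult_right_le_imp_le[OF _ pos])
  then show ?thesis unfolding Y_def .
qed

definition B3U where "B3U = (\<Union>i<n. B3 i)"

lemma B3U_card: "real (card B3U) \<le> real (w ^ T) / 512"
proof -
  define Z where "Z = (2 * real n) ^ 9"
  have np: "0 < real n" using npos by simp
  have Zp: "0 < Z" unfolding Z_def using np by simp
  have Z2: "2 ^ 9 \<le> Z" unfolding Z_def using npos by (intro power_mono) auto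
  have e11: "(2 * real n) ^ 11 = (4 * real n * real n) * Z"
  proof -
    have "(2 * real n) ^ 11 = (2 * real n) ^ 2 * (2 * real n) ^ 9" by (simp flip: power_add)
    then show ?thesis unfolding Z_def by (simp add: power2_eq_square)
  qed
  have "card B3U \<le> (\<Sum>i<n. card (B3 i))" unfolding B3U_def by (rule card_UN_le) simp
  then have "real (card B3U) \<le> real (\<Sum>i<n. card (B3 i))" by (simp only: of_nat_le_iff)
  also have "real (\<Sum>i<n. card (B3 i)) = (\<Sum>i<n. real (card (B3 i)))" by (rule of_nat_sum)
  also have "\<dots> \<le> (\<Sum>i<n. real (w ^ T) * (4 * real n / (2 * real n) ^ 11))" by (intro sum_mono B3_card) auto
  also have "\<dots> = real n * (real (w ^ T) * (4 * real n / (2 * real n) ^ 11))" by simp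
  also have "\<dots> = real (w ^ T) / Z" unfolding e11 using np Zp by (simp add: field_simps)
  also have "\<dots> \<le> real (w ^ T) / 2 ^ 9" using Z2 by (intro divide_left_mono) auto
  finally show ?thesis by simp
qed

end


context lpset begin

lemma dual_step: assumes "inv x"
  shows "(1 - eps) * (\<Sum>j<m. p x j) \<le> (1 + eps) * sx x + V x + Sx x + eps"
proof -
  have xpos: "\<And>i. i < n \<Longrightarrow> 0 < x i" using assms unfolding inv_def by auto
  have pa: "(\<Sum>j<m. p x j * ax x j) = sx x + (\<Sum>i<n. x i * g x i)"
  proof -
    have "(\<Sum>j<m. p x j * ax x j) = (\<Sum>i<n. x i * g x i + x i)" unfolding sum_p_ax by (simp add: algebra_simps)
    then show ?thesis unfolding sx_def by (simp add: sum.distrib)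
  qed
  define E where "E = exp (- eps / \<mu>)"
  have Ep: "0 < E" unfolding E_def by simp
  have lower: "(1 - eps) * p x j - E \<le> p x j * ax x j" if j: "j < m" for j
  proof (cases "1 - eps \<le> ax x j")
    case True
    have "(1 - eps) * p x j \<le> ax x j * p x j" using True p_pos[of x j] by (intro mult_right_mono) auto
    then show ?thesis using Ep by (simp add: mult.commute)
  next
    case False
    have "(ax x j - 1) / \<mu> \<le> - eps / \<mu>" using False mu_pos by (intro divide_right_mono) auto
    then have "p x j \<le> E" unfolding pvec_def E_def by simp
    moreover have "0 \<le> p x j * ax x j" using ax_nonneg[of x j] xpos j p_pos[of x j]
      by (intro mult_nonneg_nonneg) (auto intro: less_imp_le)
    moreover have "(1 - eps) * p x j \<le> p x j" using epos p_pos[of x j] by (simp add: mult_le_cancel_right1)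
    ultimately show ?thesis by linarith
  qed
  have "(\<Sum>j<m. (1 - eps) * p x j - E) \<le> (\<Sum>j<m. p x j * ax x j)" using lower by (intro sum_mono) auto
  then have l2: "(1 - eps) * (\<Sum>j<m. p x j) - real m * E \<le> (\<Sum>j<m. p x j * ax x j)"
    by (simp add: sum_subtractf sum_distrib_left)
  have mE: "real m * E \<le> eps" unfolding E_def using exp_neg_mu by simp
  have up: "(\<Sum>i<n. x i * g x i) \<le> V x + eps * sx x + Sx x"
  proof -
    have "(\<Sum>i<n. x i * g x i) \<le> (\<Sum>i<n. x i * xi x i + eps * x i + x i * (xi x i * g x i))"
    proof (intro sum_mono)
      fix i assume "i \<in> {..<n}" then have i: "i < n" by simp
      have "x i * g x i \<le> x i * (xi x i + eps + xi x i * g x i)"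
        using xi_props(6)[OF i, of x] xpos[OF i] by (intro mult_left_mono) auto
      then show "x i * g x i \<le> x i * xi x i + eps * x i + x i * (xi x i * g x i)" by (simp add: algebra_simps)
    qed
    also have "\<dots> = V x + eps * sx x + Sx x" unfolding V_def sx_def Sx_def by (simp add: sum.distrib sum_distrib_left)
    finally show ?thesis .
  qed
  show ?thesis using l2 mE up pa by (simp add: algebra_simps)
qed

lemma ybar_nonneg: "0 \<le> ybar A m n eps ts j"
  unfolding ybar_def using p_pos by (intro mult_nonneg_nonneg sum_nonneg) (auto intro: less_imp_le)

lemma cover_feasible:
  assumes pk: "\<And>i. i < n \<Longrightarrow> pick' i < m \<and> A (pick' i) i = colnorm A m i"
  shows "\<forall>j<m. 0 \<le> cover_output A m n eps pick' ts j"
    "\<forall>i<n. 1 \<le> (\<Sum>j<m. A j i * cover_output A m n eps pick' ts j)"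
proof -
  define yb where "yb = ybar A m n eps ts"
  define la where "la i = lam A m eps yb i" for i
  define S where "S j = {i. i < n \<and> la i \<le> -2 * eps \<and> pick' i = j}" for j
  define tm where "tm i j = - la i / A j i" for i j
  have a2: "alg2 A m n eps pick' yb j = yb j + (\<Sum>i\<in>S j. tm i j)" for j
    unfolding alg2_def S_def tm_def la_def ..
  have Sfin: "finite (S j)" for j unfolding S_def by simp
  have tm_nn: "0 \<le> tm i j" if "i \<in> S j" for i j
  proof -
    have i: "i < n" "la i \<le> -2 * eps" "pick' i = j" using that unfolding S_def by auto
    have "A j i = colnorm A m i" using pk[OF i(1)] i(3) by auto
    then have "0 < A j i" using col_ge1[OF i(1)] by simp
    moreover have "0 \<le> - la i" using i(2) epos by simp
    ultimately show ?thesis unfolding tm_def by (intro divide_nonneg_pos) auto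
  qed
  have ybn: "0 \<le> yb j" for j unfolding yb_def by (rule ybar_nonneg)
  have a2nn: "0 \<le> alg2 A m n eps pick' yb j" for j
    unfolding a2 using ybn tm_nn by (intro add_nonneg_nonneg sum_nonneg) auto
  have e3: "0 < 1 - 3 * eps" using esmall by simp
  show "\<forall>j<m. 0 \<le> cover_output A m n eps pick' ts j"
    unfolding cover_output_def yb_def[symmetric] using a2nn e3 by simp
  have cov: "1 - 3 * eps \<le> (\<Sum>j<m. A j i * alg2 A m n eps pick' yb j)" if i: "i < n" for i
  proof -
    have sp: "(\<Sum>j<m. A j i * alg2 A m n eps pick' yb j) = (\<Sum>j<m. A j i * yb j) + (\<Sum>j<m. A j i * (\<Sum>i'\<in>S j. tm i' j))"
      unfolding a2 by (simp add: algebra_simps sum.distrib)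
    have first: "(\<Sum>j<m. A j i * yb j) = la i + 1 - eps" unfolding la_def lam_def by simp
    have nn2: "0 \<le> A j i * (\<Sum>i'\<in>S j. tm i' j)" if "j \<in> {..<m}" for j
      using Anonneg[of j i] that i tm_nn by (intro mult_nonneg_nonneg sum_nonneg) auto
    show ?thesis
    proof (cases "la i \<le> -2 * eps")
      case True
      define j0 where "j0 = pick' i"
      have j0: "j0 < m" "A j0 i = colnorm A m i" using pk[OF i] unfolding j0_def by auto
      have iS: "i \<in> S j0" unfolding S_def j0_def using i True by simp
      have Apos: "0 < A j0 i" using j0 col_ge1[OF i] by simp
      have "tm i j0 \<le> (\<Sum>i'\<in>S j0. tm i' j0)" using iS Sfin tm_nn by (intro member_le_sum) auto
      then have "A j0 i * tm i j0 \<le> A j0 i * (\<Sum>i'\<in>S j0. tm i' j0)" using Apos by (intro mult_left_mono) auto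
      also have "\<dots> \<le> (\<Sum>j<m. A j i * (\<Sum>i'\<in>S j. tm i' j))"
        using nn2 j0 by (intro member_le_sum[of j0 "{..<m}" "\<lambda>j. A j i * (\<Sum>i'\<in>S j. tm i' j)"]) auto
      finally have "- la i \<le> (\<Sum>j<m. A j i * (\<Sum>i'\<in>S j. tm i' j))" unfolding tm_def using Apos by simp
      then show ?thesis using sp first epos by linarith
    next
      case False
      have "0 \<le> (\<Sum>j<m. A j i * (\<Sum>i'\<in>S j. tm i' j))" using nn2 by (intro sum_nonneg) auto
      then show ?thesis using sp first False by linarith
    qed
  qed
  show "\<forall>i<n. 1 \<le> (\<Sum>j<m. A j i * cover_output A m n eps pick' ts j)"
  proof (intro allI impI)
    fix i assume i: "i < n"
    have "(\<Sum>j<m. A j i * cover_output A m n eps pick' ts j) = (\<Sum>j<m. A j i * alg2 A m n eps pick' yb j) / (1 - 3 * eps)"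
      unfolding cover_output_def yb_def by (simp add: sum_divide_distrib)
    also have "\<dots> \<ge> 1" using cov[OF i] e3 by simp
    finally show "1 \<le> (\<Sum>j<m. A j i * cover_output A m n eps pick' ts j)" .
  qed
qed

end


context lpset begin

lemma good_bound:
  assumes ts: "ts \<in> Ls w T" and n1: "ts \<notin> B1" and n2: "ts \<notin> B2" and n3: "ts \<notin> B3U"
  shows "(\<Sum>j<m. cover_output A m n eps pick' ts j) \<le> (1 + 100 * eps) * OPT A m n"
proof -
  have len: "length ts = T" using ts unfolding Ls_def by simp
  define yb where "yb = ybar A m n eps ts"
  have noS: "\<not> lam A m eps yb i \<le> -2 * eps" if "i < n" for i
    using n3 ts that unfolding B3U_def B3_def yb_def by auto
  have a2: "alg2 A m n eps pick' yb j = yb j" for j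
  proof -
    have e: "{i. i < n \<and> lam A m eps yb i \<le> -2 * eps \<and> pick' i = j} = {}" using noS by auto
    show ?thesis unfolding alg2_def e by simp
  qed
  define Op where "Op = OPT A m n"
  define P where "P = (\<Sum>k<T. \<Sum>j<m. p (X ts k) j)"
  have Tp: "0 < real T" using T_pos by simp
  have syb: "(\<Sum>j<m. yb j) = P / real T"
  proof -
    have "(\<Sum>j<m. yb j) = (\<Sum>j<m. \<Sum>k<T. p (X ts k) j) / real T"
      unfolding yb_def ybar_def by (simp add: sum_divide_distrib)
    also have "(\<Sum>j<m. \<Sum>k<T. p (X ts k) j) = P" unfolding P_def by (rule sum.swap)
    finally show ?thesis .
  qed
  have dual: "(1 - eps) * P \<le> (\<Sum>k<T. (1 + eps) * sx (X ts k) + V (X ts k) + Sx (X ts k) + eps)"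
  proof -
    have "(1 - eps) * P = (\<Sum>k<T. (1 - eps) * (\<Sum>j<m. p (X ts k) j))" unfolding P_def by (simp add: sum_distrib_left)
    also have "\<dots> \<le> (\<Sum>k<T. (1 + eps) * sx (X ts k) + V (X ts k) + Sx (X ts k) + eps)"
      by (intro sum_mono dual_step inv_X)
    finally show ?thesis .
  qed
  have split: "(\<Sum>k<T. (1 + eps) * sx (X ts k) + V (X ts k) + Sx (X ts k) + eps) =
      (1 + eps) * (\<Sum>k<T. sx (X ts k)) + (\<Sum>k<T. V (X ts k)) + (\<Sum>k<T. Sx (X ts k)) + real T * eps"
    by (simp add: sum.distrib sum_distrib_left)
  have ssx: "(\<Sum>k<T. sx (X ts k)) \<le> real T * K"
  proof -
    have "(\<Sum>k<T. sx (X ts k)) \<le> (\<Sum>k<T. K)" by (intro sum_mono sx_le_K inv_X)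
    then show ?thesis by simp
  qed
  have sSx: "(\<Sum>k<T. Sx (X ts k)) \<le> 200 * (real w / \<alpha>) * (eps + K)"
    using n1 ts unfolding B1_def by (simp add: field_simps)
  have fh2: "Fadd h2 ts = (\<Sum>k<T. V (X ts k)) - real w * (\<Sum>k<T. Veta ts k)"
    unfolding Fadd_def h2_def Veta_def len by (simp add: sum_subtractf sum_distrib_left)
  have sV: "(\<Sum>k<T. V (X ts k)) \<le> 5 * eps * real T * K + real w * (1 / \<alpha> + \<alpha> * real T * K)"
  proof -
    have "Fadd h2 ts \<le> 5 * eps * real T * K" using n2 ts unfolding B2_def by auto
    moreover have "real w * (\<Sum>k<T. Veta ts k) \<le> real w * (1 / \<alpha> + \<alpha> * real T * K)"
      using D2[of ts T] by (intro mult_left_mono) auto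
    ultimately show ?thesis using fh2 by linarith
  qed
  define W where "W = real w / (\<alpha> * real T)"
  have W: "W \<le> eps / 4" "0 \<le> W" unfolding W_def using wT alpha_pos Tp by auto
  have aw: "\<alpha> * real w \<le> eps / 40" by (rule alpha_w)
  have Kp: "0 \<le> K" using K_ge by simp
  have big: "(1 - eps) * P \<le> real T * ((1 + eps) * K + 5 * eps * K + (\<alpha> * real w) * K + eps) + (real w / \<alpha>) * (1 + 200 * (eps + K))"
  proof -
    have "(1 - eps) * P \<le> (1 + eps) * (real T * K) + (5 * eps * real T * K + real w * (1 / \<alpha> + \<alpha> * real T * K))
        + 200 * (real w / \<alpha>) * (eps + K) + real T * eps"
    proof -
      have "(1 + eps) * (\<Sum>k<T. sx (X ts k)) \<le> (1 + eps) * (real T * K)" using ssx epos by (intro mult_left_mono) auto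
      then show ?thesis using dual split sSx sV by linarith
    qed
    also have "\<dots> = real T * ((1 + eps) * K + 5 * eps * K + (\<alpha> * real w) * K + eps) + (real w / \<alpha>) * (1 + 200 * (eps + K))"
    proof -
      define u where "u = real w / \<alpha>"
      have "real w * (1 / \<alpha>) = u" unfolding u_def by simp
      then show ?thesis unfolding u_def[symmetric] by (simp add: algebra_simps)
    qed
    finally show ?thesis .
  qed
  define Y where "Y = P / real T"
  have Ydef: "(1 - eps) * Y \<le> (1 + eps) * K + 5 * eps * K + (\<alpha> * real w) * K + eps + W * (1 + 200 * (eps + K))"
  proof -
    have "(1 - eps) * Y = (1 - eps) * P / real T" unfolding Y_def by simp
    also have "\<dots> \<le> (real T * ((1 + eps) * K + 5 * eps * K + (\<alpha> * real w) * K + eps) + (real w / \<alpha>) * (1 + 200 * (eps + K))) / real T"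
      using big Tp by (intro divide_right_mono) auto
    also have "\<dots> = (1 + eps) * K + 5 * eps * K + (\<alpha> * real w) * K + eps + W * (1 + 200 * (eps + K))"
      unfolding W_def using Tp alpha_pos by (simp add: field_simps)
    finally show ?thesis .
  qed
  have st2: "(\<alpha> * real w) * K \<le> eps / 40 * K" using aw Kp by (intro mult_right_mono) auto
  have st3: "W * (1 + 200 * (eps + K)) \<le> eps / 4 * (1 + 200 * (eps + K))" using W Kp epos by (intro mult_right_mono) auto
  define a where "a = eps * Op"
  define b where "b = eps * a"
  have O1: "1 \<le> Op" unfolding Op_def by (rule OPT_ge1)
  have Keq: "K = Op + 2 * a" unfolding K_def Op_def a_def by (simp add: algebra_simps)
  have eK: "eps * K = a + 2 * b" unfolding K_def Op_def a_def b_def by (simp add: algebra_simps)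
  have ea: "eps \<le> a" unfolding a_def using O1 epos by (simp add: mult_le_cancel_left1)
  have ap: "0 \<le> a" unfolding a_def using O1 epos by simp
  have ea30: "eps * a \<le> a / 30"
  proof -
    have "eps * a \<le> (1/30) * a" using esmall ap by (rule mult_right_mono)
    then show ?thesis by simp
  qed
  have ba: "b \<le> a / 30" unfolding b_def by (rule ea30)
  have ee: "eps * eps \<le> eps / 30"
  proof -
    have "eps * eps \<le> (1/30) * eps" using esmall epos by (intro mult_right_mono) auto
    then show ?thesis by simp
  qed
  have R1: "(1 + eps) * K + 5 * eps * K + eps / 40 * K + eps + eps / 4 * (1 + 200 * (eps + K)) =
     K + (56 + 1/40) * (eps * K) + 5/4 * eps + 50 * (eps * eps)"
    by (simp add: algebra_simps)
  have c1: "(1 - eps) * Y \<le> (1 + eps) * K + 5 * eps * K + eps / 40 * K + eps + eps / 4 * (1 + 200 * (eps + K))"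
    using Ydef st2 st3 by linarith
  then have c2: "(1 - eps) * Y \<le> K + (56 + 1/40) * (eps * K) + 5/4 * eps + 50 * (eps * eps)"
    unfolding R1 .
  then have c3: "(1 - eps) * Y \<le> (Op + 2 * a) + (56 + 1/40) * (a + 2 * b) + 5/4 * eps + 50 * (eps * eps)"
    unfolding eK by (simp only: Keq)
  have dd: "(56 + 1 / 40) * (a + 2 * b) = 2241/40 * a + 2241/20 * b" by (simp add: algebra_simps)
  have YO: "(1 - eps) * Y \<le> Op + 65 * a"
    using c3 ea ap ba ee dd by linarith
  have Yn: "0 \<le> Y" unfolding Y_def P_def using Tp p_pos
    by (intro divide_nonneg_pos sum_nonneg) (auto intro: less_imp_le)
  define Z where "Z = Y / (1 - 3 * eps)"
  have e3: "0 < 1 - 3 * eps" using esmall by simp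
  have sumZ: "(\<Sum>j<m. cover_output A m n eps pick' ts j) = Z"
    unfolding cover_output_def a2 yb_def[symmetric] Z_def Y_def syb[symmetric] by (simp add: sum_divide_distrib)
  have Zn: "0 \<le> Z" unfolding Z_def using Yn e3 by simp
  have YZ: "Y = (1 - 3 * eps) * Z" unfolding Z_def using e3 by simp
  have Zb: "Z \<le> Op + 100 * a"
  proof (rule ccontr)
    assume "\<not> Z \<le> Op + 100 * a"
    then have Zg: "Op + 100 * a < Z" by simp
    have e4: "0 < 1 - 4 * eps" using esmall by simp
    have "(1 - 4 * eps) * (Op + 100 * a) \<le> (1 - 4 * eps) * Z" using Zg e4 by (intro mult_left_mono) auto
    moreover have "(1 - 4 * eps) * Z \<le> (1 - eps) * Y"
    proof -
      have "(1 - eps) * Y = ((1 - eps) * (1 - 3 * eps)) * Z" unfolding YZ by (simp add: mult.assoc)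
      moreover have "1 - 4 * eps \<le> (1 - eps) * (1 - 3 * eps)" using epos by (simp add: algebra_simps)
      moreover have "(1 - 4 * eps) * Z \<le> ((1 - eps) * (1 - 3 * eps)) * Z"
        using \<open>1 - 4 * eps \<le> (1 - eps) * (1 - 3 * eps)\<close> Zn by (rule mult_right_mono)
      ultimately show ?thesis by linarith
    qed
    moreover have "(1 - 4 * eps) * (Op + 100 * a) = Op + 96 * a - 400 * (eps * a)" unfolding a_def by (simp add: algebra_simps)
    moreover have "eps * a \<le> a / 30" by (rule ea30)
    moreover have "Op + 65 * a < Op + 96 * a - 400 * (eps * a) \<or> a = 0"
      using \<open>eps * a \<le> a / 30\<close> ap by auto
    ultimately show False using YO Zg ap O1 ea epos by linarith
  qed
  show ?thesis using sumZ Zb unfolding a_def Op_def by (simp add: algebra_simps)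
qed

end


context lpset begin

lemma w_le_Lam: "real w \<le> 2 * ln (1 / eps)"
proof -
  have "log 2 (1/eps) = ln (1/eps) / ln 2" by (simp add: log_def)
  also have "\<dots> \<le> ln (1/eps) / (2/3)" using ln2_ge_two_thirds ln_inv_eps_ge3
    by (intro divide_left_mono) auto
  finally have "real w \<le> 3/2 * ln (1/eps) + 1" using w_ge by simp
  then show ?thesis using ln_inv_eps_ge3 by linarith
qed

lemma T_bound: "real T \<le> 400 * (ln (1/eps))\<^sup>2 * ln (real n * real m / eps) * ln (2 * real n) / eps\<^sup>2"
proof -
  define La where "La = ln (1/eps)"
  define l2 where "l2 = ln (2 * real n)"
  have La3: "3 \<le> La" unfolding La_def by (rule ln_inv_eps_ge3)
  have L3: "3 \<le> Lg" by (rule Lg_ge3)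
  have l2g: "2/3 \<le> l2" unfolding l2_def by (rule ln2n)
  have e2: "0 < eps\<^sup>2" using epos by simp
  define Q where "Q = La\<^sup>2 * Lg * l2 / eps\<^sup>2"
  define a0 where "a0 = 6 * real w * ln (2 * real n) / (\<alpha> * eps)"
  define b0 where "b0 = 2 * real w ^ 2 * ln (real n / eps) / eps ^ 2"
  have Tle: "real T \<le> max a0 b0 + 1"
  proof -
    have "0 \<le> a0" unfolding a0_def using alpha_pos epos ln2n by (intro divide_nonneg_pos mult_nonneg_nonneg) auto
    then have M0: "0 \<le> max a0 b0" by simp
    have "real T = real (nat \<lceil>max a0 b0\<rceil>)" unfolding Tpar_def a0_def b0_def ..
    also have "\<dots> = of_int \<lceil>max a0 b0\<rceil>" using M0 by simp
    also have "\<dots> \<le> max a0 b0 + 1" using ceiling_correct[of "max a0 b0"] by linarith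
    finally show ?thesis .
  qed
  have wL: "real w \<le> 2 * La" unfolding La_def by (rule w_le_Lam)
  have wL2: "real w \<le> 2/3 * La\<^sup>2"
  proof -
    have "2/3 * 3 * La \<le> 2/3 * La * La" using La3 by (intro mult_right_mono) auto
    then have "2 * La \<le> 2/3 * La * La" by simp
    then show ?thesis using wL by (simp add: power2_eq_square)
  qed
  have a0b: "a0 \<le> 320 * Q"
  proof -
    have "a0 = 480 * real w * Lg * l2 / eps\<^sup>2" unfolding a0_def alpha_eq l2_def using epos L3
      by (simp add: field_simps power2_eq_square)
    also have "\<dots> \<le> 480 * (2/3 * La\<^sup>2) * Lg * l2 / eps\<^sup>2"
      using wL2 L3 l2g e2 by (intro divide_right_mono mult_right_mono) auto
    also have "\<dots> = 320 * Q" unfolding Q_def by simp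
    finally show ?thesis .
  qed
  have b0b: "b0 \<le> 12 * Q"
  proof -
    have w2: "(real w)\<^sup>2 \<le> (2 * La)\<^sup>2" using wL by (intro power_mono) auto
    have "ln (1 / eps) \<le> ln (real n / eps)" using npos epos by (subst ln_le_cancel_iff) (auto simp: divide_right_mono)
    then have lnn: "0 \<le> ln (real n / eps)" using ln_inv_eps_ge3 by linarith
    have "b0 \<le> 2 * (2 * La)\<^sup>2 * Lg / eps\<^sup>2" unfolding b0_def
      using w2 Lg_ge(2) L3 e2 lnn
      by (intro divide_right_mono mult_mono) (auto simp: power2_eq_square)
    also have "\<dots> = 8 * (La\<^sup>2 * Lg) / eps\<^sup>2" by (simp add: power2_eq_square)
    also have "\<dots> \<le> (12 * l2) * (La\<^sup>2 * Lg) / eps\<^sup>2"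
      using l2g L3 e2 by (intro divide_right_mono mult_right_mono) auto
    also have "\<dots> = 12 * Q" unfolding Q_def by simp
    finally show ?thesis .
  qed
  have Q1: "1 \<le> Q"
  proof -
    have e21: "eps\<^sup>2 \<le> 1" using epos esmall by (simp add: power_le_one)
    have "1 \<le> La\<^sup>2 * Lg * l2"
    proof -
      have "3 * 3 \<le> La * La" using La3 by (intro mult_mono) auto
      then have "9 \<le> La\<^sup>2" by (simp add: power2_eq_square)
      then have "9 * 3 \<le> La\<^sup>2 * Lg" using L3 by (intro mult_mono) auto
      then have "27 * (2/3) \<le> La\<^sup>2 * Lg * l2" using l2g by (intro mult_mono) auto
      then show ?thesis by simp
    qed
    then show ?thesis unfolding Q_def using e21 e2 by (simp add: le_divide_eq)
  qed
  have "real T \<le> 321 * Q" using Tle a0b b0b Q1 by linarith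
  also have "\<dots> \<le> 400 * Q" using Q1 by simp
  finally show ?thesis unfolding Q_def La_def l2_def Lg_def by simp
qed

lemma prob_good:
  assumes pk: "\<And>ts i. i < n \<Longrightarrow> pick ts i < m \<and> A (pick ts i) i = colnorm A m i"
  shows "9/10 \<le> measure_pmf.prob (pmf_of_set (choice_seqs m n eps))
     {ts. (\<Sum>j<m. cover_output A m n eps (pick ts) ts j) \<le> (1 + 400 * eps) * OPT A m n}"
proof -
  define G where "G = {ts. (\<Sum>j<m. cover_output A m n eps (pick ts) ts j) \<le> (1 + 400 * eps) * OPT A m n}"
  define CS where "CS = Ls w T"
  have fin: "finite CS" unfolding CS_def by (rule Ls_finite)
  have cardCS: "card CS = w ^ T" unfolding CS_def by (rule Ls_card)
  have wTp: "0 < w ^ T" using w_ge5 by simp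
  have ne: "CS \<noteq> {}" using cardCS wTp by auto
  have sub: "CS - G \<subseteq> B1 \<union> B2 \<union> B3U"
  proof
    fix ts assume a: "ts \<in> CS - G"
    show "ts \<in> B1 \<union> B2 \<union> B3U"
    proof (rule ccontr)
      assume "ts \<notin> B1 \<union> B2 \<union> B3U"
      then have "(\<Sum>j<m. cover_output A m n eps (pick ts) ts j) \<le> (1 + 100 * eps) * OPT A m n"
        using a unfolding CS_def by (intro good_bound) auto
      also have "\<dots> \<le> (1 + 400 * eps) * OPT A m n" using OPT_ge1 epos by (intro mult_right_mono) auto
      finally show False using a unfolding G_def by auto
    qed
  qed
  have Bsub: "B1 \<union> B2 \<union> B3U \<subseteq> CS" unfolding CS_def B1_def B2_def B3U_def B3_def by auto
  have finB: "finite (B1 \<union> B2 \<union> B3U)" using Bsub fin by (rule finite_subset)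
  have "card (CS - G) \<le> card (B1 \<union> B2 \<union> B3U)" by (rule card_mono[OF finB sub])
  also have "\<dots> \<le> card B1 + card B2 + card B3U" by (meson add_le_mono card_Un_le le_trans order_refl)
  finally have cd: "real (card (CS - G)) \<le> real (card B1) + real (card B2) + real (card B3U)" by linarith
  have cu: "card CS \<le> card (CS \<inter> G) + card (CS - G)"
  proof -
    have "CS = (CS \<inter> G) \<union> (CS - G)" by auto
    then have "card CS = card ((CS \<inter> G) \<union> (CS - G))" by simp
    also have "\<dots> \<le> card (CS \<inter> G) + card (CS - G)" by (rule card_Un_le)
    finally show ?thesis .
  qed
  have "real (w ^ T) * (9/10) \<le> real (card (CS \<inter> G))"
    using cu cd B1_card B2_card B3U_card cardCS by linarith
  then have "9/10 \<le> real (card (CS \<inter> G)) / real (card CS)" using cardCS wTp by (simp add: field_simps)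
  also have "real (card (CS \<inter> G)) / real (card CS) = measure_pmf.prob (pmf_of_set CS) G"
    by (rule measure_pmf_of_set[OF ne fin, symmetric])
  finally show ?thesis unfolding CS_def G_def CS_eq .
qed

end


lemma main_instance:
  fixes m n :: nat and A :: "nat \<Rightarrow> nat \<Rightarrow> real" and eps :: real and pick :: "nat list \<Rightarrow> nat \<Rightarrow> nat"
  assumes "0 < n" "\<forall>j<m. \<forall>i<n. 0 \<le> A j i" "\<forall>i<n. \<exists>j<m. A j i \<noteq> 0"
    "Min (colnorm A m ` {..<n}) = 1" "0 < eps" "eps \<le> 1/30"
    "\<forall>ts i. i < n \<longrightarrow> pick ts i < m \<and> A (pick ts i) i = colnorm A m i"
  shows "(\<forall>ts\<in>choice_seqs m n eps.
        (\<forall>j<m. 0 \<le> cover_output A m n eps (pick ts) ts j) \<and>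
        (\<forall>i<n. (\<Sum>j<m. A j i * cover_output A m n eps (pick ts) ts j) \<ge> 1))
    \<and> measure_pmf.prob (pmf_of_set (choice_seqs m n eps))
        {ts. (\<Sum>j<m. cover_output A m n eps (pick ts) ts j) \<le> (1 + 400 * eps) * OPT A m n} \<ge> 9/10
    \<and> real (Tpar m n eps) \<le>
        400 * (ln (1/eps))^2 * ln (real n * real m / eps) * ln (2 * real n) / eps^2"
proof -
  interpret lpset A m n eps using assms by unfold_locales auto
  have pk: "\<And>ts i. i < n \<Longrightarrow> pick ts i < m \<and> A (pick ts i) i = colnorm A m i" using assms(7) by auto
  have c1: "\<forall>ts\<in>choice_seqs m n eps.
        (\<forall>j<m. 0 \<le> cover_output A m n eps (pick ts) ts j) \<and>
        (\<forall>i<n. (\<Sum>j<m. A j i * cover_output A m n eps (pick ts) ts j) \<ge> 1)"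
  proof
    fix ts
    have pk': "\<And>i. i < n \<Longrightarrow> pick ts i < m \<and> A (pick ts i) i = colnorm A m i" using pk by auto
    show "(\<forall>j<m. 0 \<le> cover_output A m n eps (pick ts) ts j) \<and>
        (\<forall>i<n. (\<Sum>j<m. A j i * cover_output A m n eps (pick ts) ts j) \<ge> 1)"
      using cover_feasible[OF pk', of ts] by auto
  qed
  show ?thesis using c1 prob_good[OF pk] T_bound by auto
qed

theorem theorem2:
  shows "\<exists>C>0. \<exists>D>0. \<forall>(m::nat) (n::nat) (A::nat \<Rightarrow> nat \<Rightarrow> real) (eps::real)
            (pick::nat list \<Rightarrow> nat \<Rightarrow> nat).
    0 < n \<longrightarrow>
    (\<forall>j<m. \<forall>i<n. 0 \<le> A j i) \<longrightarrow>
    (\<forall>i<n. \<exists>j<m. A j i \<noteq> 0) \<longrightarrow>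
    Min (colnorm A m ` {..<n}) = 1 \<longrightarrow>
    0 < eps \<longrightarrow> eps \<le> 1/30 \<longrightarrow>
    (\<forall>ts i. i < n \<longrightarrow> pick ts i < m \<and> A (pick ts i) i = colnorm A m i) \<longrightarrow>
    (\<forall>ts\<in>choice_seqs m n eps.
        (\<forall>j<m. 0 \<le> cover_output A m n eps (pick ts) ts j) \<and>
        (\<forall>i<n. (\<Sum>j<m. A j i * cover_output A m n eps (pick ts) ts j) \<ge> 1))
    \<and> measure_pmf.prob (pmf_of_set (choice_seqs m n eps))
        {ts. (\<Sum>j<m. cover_output A m n eps (pick ts) ts j) \<le> (1 + C * eps) * OPT A m n} \<ge> 9/10
    \<and> real (Tpar m n eps) \<le>
        D * (ln (1/eps))^2 * ln (real n * real m / eps) * ln (2 * real n) / eps^2"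
  apply (rule exI[of _ "400::real"], rule conjI, simp)
  apply (rule exI[of _ "400::real"], rule conjI, simp)
  apply (intro allI impI)
  apply (rule main_instance)
        apply assumption+
  done


end
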